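(* Let $q$ be a prime, $A$ a group of exponent $q$ and order $q^3$, and $B$ a subgroup of order $q$ of the center $Z(A)$. Suppose $A$ acts by automorphisms on a finite group $G$ of order coprime to $q$ with $G=PH$, where $P$ and $H$ are $A$-invariant subgroups, $P$ is a normal $p$-subgroup of $G$ for a prime $p$, and $H$ is a nilpotent $p'$-subgroup. Let $A_1,\dots,A_{q+1}$ be the subgroups of order $q^2$ of $A$ containing $B$. Then $C_P(B)=\prod_{i=1}^{q+1} C_P(A_i)$ and $C_H(B)=\prod_{i=1}^{q+1} C_H(A_i)$.
   Context: For a group $X$ of automorphisms, $C_P(X)$ denotes the set of elements of $P$ fixed by every element of $X$. The products are products of subgroups (sets of products of elements). *)

theory Defs
  imports "HOL-Algebra.Algebra"
begin

definition group_center :: "('a, 'b) monoid_scheme \<Rightarrow> 'a set" where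
  "group_center G = {z \<in> carrier G. \<forall>x \<in> carrier G. z \<otimes>\<^bsub>G\<^esub> x = x \<otimes>\<^bsub>G\<^esub> z}"

definition comm_subgroup :: "('a, 'b) monoid_scheme \<Rightarrow> 'a set \<Rightarrow> 'a set \<Rightarrow> 'a set" where
  "comm_subgroup G K H = generate G (\<Union>k\<in>K. \<Union>h\<in>H.
      {k \<otimes>\<^bsub>G\<^esub> h \<otimes>\<^bsub>G\<^esub> inv\<^bsub>G\<^esub> k \<otimes>\<^bsub>G\<^esub> inv\<^bsub>G\<^esub> h})"

fun lower_central :: "('a, 'b) monoid_scheme \<Rightarrow> 'a set \<Rightarrow> nat \<Rightarrow> 'a set" where
  "lower_central G H 0 = H"
| "lower_central G H (Suc n) = comm_subgroup G (lower_central G H n) H"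

definition nilpotent_subgroup :: "('a, 'b) monoid_scheme \<Rightarrow> 'a set \<Rightarrow> bool" where
  "nilpotent_subgroup G H \<longleftrightarrow> subgroup H G \<and> (\<exists>n. lower_central G H n = {\<one>\<^bsub>G\<^esub>})"

definition acts_by_automorphisms ::
  "('c, 'd) monoid_scheme \<Rightarrow> ('a, 'b) monoid_scheme \<Rightarrow> ('c \<Rightarrow> 'a \<Rightarrow> 'a) \<Rightarrow> bool" where
  "acts_by_automorphisms A G \<alpha> \<longleftrightarrow>
     group_action A (carrier G) \<alpha> \<and> (\<forall>a \<in> carrier A. \<alpha> a \<in> hom G G)"

definition fixed_points :: "('c \<Rightarrow> 'a \<Rightarrow> 'a) \<Rightarrow> 'c set \<Rightarrow> 'a set \<Rightarrow> 'a set" where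
  "fixed_points f Y T = {y \<in> T. \<forall>c \<in> Y. f c y = y}"

fun set_prod_list :: "('a, 'b) monoid_scheme \<Rightarrow> 'a set list \<Rightarrow> 'a set" where
  "set_prod_list G [] = {\<one>\<^bsub>G\<^esub>}"
| "set_prod_list G (S # Ss) = S <#>\<^bsub>G\<^esub> set_prod_list G Ss"

end

theory Submission
  imports Defs
begin


lemma (in group_action) fix_mod:
  assumes fin: "finite (carrier G)" "finite E" and ord: "order G = p ^ k"
    and p: "Factorial_Ring.prime p" and XE: "Y \<subseteq> E"
    and inv: "\<forall>g\<in>carrier G. \<forall>x\<in>Y. \<phi> g x \<in> Y"
  shows "p dvd card {x\<in>Y. \<exists>g\<in>carrier G. \<phi> g x \<noteq> x}"
proof -
  interpret G: group G using group_hom group_hom.axioms(1) by auto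
  let ?S = "{x\<in>Y. \<exists>g\<in>carrier G. \<phi> g x \<noteq> x}"
  let ?C = "(\<lambda>x. orbit G \<phi> x) ` ?S"
  have orbS: "orbit G \<phi> x \<subseteq> ?S" if xS: "x \<in> ?S" for x
  proof
    fix y assume "y \<in> orbit G \<phi> x"
    then obtain h where h: "h \<in> carrier G" "y = \<phi> h x" unfolding orbit_def by blast
    have yX: "y \<in> Y" using h inv xS by auto
    from xS obtain g where g: "g \<in> carrier G" "\<phi> g x \<noteq> x" by blast
    have "\<exists>g\<in>carrier G. \<phi> g y \<noteq> y"
    proof (rule ccontr)
      assume "\<not> ?thesis"
      hence fy: "\<forall>g\<in>carrier G. \<phi> g y = y" by blast
      have "\<phi> (inv h) y = x" using orbit_sym_aux[OF h(1) _ h(2)[symmetric]] xS XE by auto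
      hence "x = y" using fy h by auto
      thus False using g fy by auto
    qed
    thus "y \<in> ?S" using yX by blast
  qed
  have U: "\<Union>?C = ?S"
  proof
    show "\<Union>?C \<subseteq> ?S" using orbS by blast
    show "?S \<subseteq> \<Union>?C" using orbit_refl XE by blast
  qed
  have "p dvd card (\<Union>?C)"
  proof (rule dvd_partition)
    show "finite (\<Union>?C)" by (rule finite_subset[OF _ fin(2)]) (use U XE in auto)
    show "\<forall>c\<in>?C. p dvd card c"
    proof
      fix c assume "c \<in> ?C"
      then obtain x where xS: "x \<in> ?S" and c: "c = orbit G \<phi> x" by blast
      have xE: "x \<in> E" using xS XE by auto
      have "card c * card (stabilizer G \<phi> x) = p ^ k"
        using orbit_stabilizer_theorem[OF xE] c ord by simp
      hence "card c dvd p ^ k" by (rule dvdI[of _ _ "card (stabilizer G \<phi> x)", OF sym])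
      then obtain i where i: "card c = p ^ i" using divides_primepow_nat[OF p] by blast
      from xS obtain g where g: "g \<in> carrier G" "\<phi> g x \<noteq> x" by blast
      have "x \<in> c" using c orbit_refl xE by auto
      moreover have "\<phi> g x \<in> c" using c g unfolding orbit_def by blast
      moreover have "finite c" by (rule finite_subset[OF _ fin(2)]) (use c orbS[OF xS] XE in auto)
      ultimately have "card c \<noteq> 1" using g(2)
      proof -
        assume a: "x \<in> c" "\<phi> g x \<in> c" "finite c" "\<phi> g x \<noteq> x"
        show "card c \<noteq> 1"
        proof
          assume "card c = 1"
          then obtain a where "c = {a}" using card_1_singletonE by blast
          thus False using a by auto
        qed
      qed
      hence "i \<noteq> 0" using i by auto
      thus "p dvd card c" using i by (simp add: dvd_power)
    qed
    show "\<forall>c1\<in>?C. \<forall>c2\<in>?C. c1 \<noteq> c2 \<longrightarrow> c1 \<inter> c2 = {}"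
    proof (intro ballI impI)
      fix c1 c2 assume "c1 \<in> ?C" "c2 \<in> ?C" "c1 \<noteq> c2"
      moreover have "c1 \<in> orbits G E \<phi>" "c2 \<in> orbits G E \<phi>"
        using \<open>c1 \<in> ?C\<close> \<open>c2 \<in> ?C\<close> XE unfolding orbits_def by auto
      ultimately show "c1 \<inter> c2 = {}" using disjoint_union by blast
    qed
  qed
  thus ?thesis using U by simp
qed

lemma (in group_action) fixed_point_exists:
  assumes fin: "finite (carrier G)" "finite E" and ord: "order G = p ^ k"
    and p: "Factorial_Ring.prime p" and XE: "Y \<subseteq> E"
    and inv: "\<forall>g\<in>carrier G. \<forall>x\<in>Y. \<phi> g x \<in> Y"
    and nd: "\<not> p dvd card Y"
  shows "\<exists>x\<in>Y. \<forall>g\<in>carrier G. \<phi> g x = x"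
proof (rule ccontr)
  assume "\<not> ?thesis"
  hence "{x\<in>Y. \<exists>g\<in>carrier G. \<phi> g x \<noteq> x} = Y" by blast
  thus False using fix_mod[OF assms(1-6)] nd by simp
qed

lemma pgroup_center:
  assumes "group K" "finite (carrier K)" "order K = p ^ k" "k > 0" "Factorial_Ring.prime p"
  shows "\<exists>z\<in>carrier K. z \<noteq> \<one>\<^bsub>K\<^esub> \<and> (\<forall>y\<in>carrier K. z \<otimes>\<^bsub>K\<^esub> y = y \<otimes>\<^bsub>K\<^esub> z)"
proof -
  interpret K: group K by fact
  interpret a: group_action K "carrier K" "\<lambda>g. \<lambda>h\<in>carrier K. g \<otimes>\<^bsub>K\<^esub> h \<otimes>\<^bsub>K\<^esub> inv\<^bsub>K\<^esub> g"
    by (rule K.action_by_conjugation)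
  define S where "S = {x\<in>carrier K. \<exists>g\<in>carrier K. g \<otimes>\<^bsub>K\<^esub> x \<otimes>\<^bsub>K\<^esub> inv\<^bsub>K\<^esub> g \<noteq> x}"
  define Z where "Z = {x\<in>carrier K. \<forall>g\<in>carrier K. g \<otimes>\<^bsub>K\<^esub> x \<otimes>\<^bsub>K\<^esub> inv\<^bsub>K\<^esub> g = x}"
  have d1: "p dvd card {x\<in>carrier K. \<exists>g\<in>carrier K. (\<lambda>h\<in>carrier K. g \<otimes>\<^bsub>K\<^esub> h \<otimes>\<^bsub>K\<^esub> inv\<^bsub>K\<^esub> g) x \<noteq> x}"
    by (rule a.fix_mod[OF assms(2) assms(2) assms(3) assms(5)]) auto
  have "{x\<in>carrier K. \<exists>g\<in>carrier K. (\<lambda>h\<in>carrier K. g \<otimes>\<^bsub>K\<^esub> h \<otimes>\<^bsub>K\<^esub> inv\<^bsub>K\<^esub> g) x \<noteq> x} = S"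
    unfolding S_def by auto
  hence d1: "p dvd card S" using d1 by simp
  have d2: "p dvd card (carrier K)" using assms(3,4) unfolding order_def by (simp add: dvd_power)
  have p1: "carrier K = S \<union> Z" unfolding S_def Z_def by blast
  have p2: "S \<inter> Z = {}" unfolding S_def Z_def by blast
  have cu: "card (S \<union> Z) = card S + card Z"
    by (rule card_Un_disjoint) (use assms(2) p1 p2 in auto)
  have "card (carrier K) = card S + card Z" using cu[folded p1] .
  hence "p dvd card S + card Z" using d2 by simp
  hence "p dvd card Z" using d1 by (simp add: dvd_add_right_iff)
  moreover have "\<one>\<^bsub>K\<^esub> \<in> Z" unfolding Z_def by auto
  moreover have fZ: "finite Z" using assms(2) unfolding Z_def by auto
  ultimately have "card Z \<ge> p" by (intro dvd_imp_le) (auto simp: card_gt_0_iff)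
  hence c2: "card Z \<ge> 2" using prime_ge_2_nat[OF assms(5)] by linarith
  have "\<exists>z\<in>Z. z \<noteq> \<one>\<^bsub>K\<^esub>"
  proof (rule ccontr)
    assume "\<not> ?thesis"
    hence "Z \<subseteq> {\<one>\<^bsub>K\<^esub>}" by blast
    hence "card Z \<le> 1" using card_mono[of "{\<one>\<^bsub>K\<^esub>}" Z] by simp
    thus False using c2 by simp
  qed
  then obtain z where z: "z \<in> Z" "z \<noteq> \<one>\<^bsub>K\<^esub>" by blast
  have zc: "z \<in> carrier K" using z unfolding Z_def by auto
  have "\<forall>y\<in>carrier K. z \<otimes>\<^bsub>K\<^esub> y = y \<otimes>\<^bsub>K\<^esub> z"
  proof
    fix y assume y: "y \<in> carrier K"
    have "y \<otimes>\<^bsub>K\<^esub> z \<otimes>\<^bsub>K\<^esub> inv\<^bsub>K\<^esub> y = z" using z y unfolding Z_def by auto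
    hence "y \<otimes>\<^bsub>K\<^esub> z \<otimes>\<^bsub>K\<^esub> inv\<^bsub>K\<^esub> y \<otimes>\<^bsub>K\<^esub> y = z \<otimes>\<^bsub>K\<^esub> y" by simp
    thus "z \<otimes>\<^bsub>K\<^esub> y = y \<otimes>\<^bsub>K\<^esub> z" using y zc by (simp add: K.m_assoc)
  qed
  thus ?thesis using z zc by auto
qed


lemma (in comm_group) hom_finprod:
  assumes h: "h \<in> hom G G" and f: "f \<in> F \<rightarrow> carrier G"
  shows "h (finprod G f F) = finprod G (\<lambda>x. h (f x)) F"
  using f
proof (induct F rule: infinite_finite_induct)
  case (infinite A)
  interpret gh: group_hom G G h using h by (simp add: group_hom_axioms_def group_hom_def is_group)
  show ?case using infinite by simp
next
  case empty
  interpret gh: group_hom G G h using h by (simp add: group_hom_axioms_def group_hom_def is_group)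
  show ?case by simp
next
  case (insert a A)
  have hc: "\<And>y. y \<in> carrier G \<Longrightarrow> h y \<in> carrier G" using h by (auto simp: hom_def)
  have "h (finprod G f (insert a A)) = h (f a \<otimes> finprod G f A)"
    using insert by simp
  also have "\<dots> = h (f a) \<otimes> h (finprod G f A)"
    using h insert by (auto simp: hom_def)
  also have "\<dots> = h (f a) \<otimes> finprod G (\<lambda>x. h (f x)) A" using insert by simp
  also have "\<dots> = finprod G (\<lambda>x. h (f x)) (insert a A)"
    using insert hc by (subst finprod_insert) (auto simp: Pi_def)
  finally show ?case .
qed

lemma (in comm_group) finprod_pow:
  assumes f: "f \<in> F \<rightarrow> carrier G"
  shows "(finprod G f F) [^] (n::nat) = finprod G (\<lambda>x. f x [^] n) F"
proof (induct n)
  case 0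
  then show ?case by simp
next
  case (Suc n)
  have "(finprod G f F) [^] Suc n = (finprod G f F) [^] n \<otimes> finprod G f F" by simp
  also have "\<dots> = finprod G (\<lambda>x. f x [^] n) F \<otimes> finprod G f F" using Suc by simp
  also have "\<dots> = finprod G (\<lambda>x. f x [^] n \<otimes> f x) F"
    using f by (subst finprod_multf) (auto simp: Pi_def)
  also have "\<dots> = finprod G (\<lambda>x. f x [^] Suc n) F" by simp
  finally show ?case .
qed

lemma (in comm_group) finprod_count:
  assumes I: "finite I" and S: "finite S" and FS: "\<forall>i\<in>I. F i \<subseteq> S" and g: "g \<in> S \<rightarrow> carrier G"
  shows "finprod G (\<lambda>i. finprod G g (F i)) I = finprod G (\<lambda>a. g a [^] card {i\<in>I. a \<in> F i}) S"
  using I FS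
proof (induct I rule: finite_induct)
  case empty
  then show ?case by simp
next
  case (insert j I)
  have gF: "\<And>i. i \<in> insert j I \<Longrightarrow> finprod G g (F i) \<in> carrier G"
    using g insert.prems by (intro finprod_closed) auto
  have "finprod G (\<lambda>i. finprod G g (F i)) (insert j I) = finprod G g (F j) \<otimes> finprod G (\<lambda>i. finprod G g (F i)) I"
    using insert gF by (subst finprod_insert) (auto simp: Pi_def)
  also have "\<dots> = finprod G g (F j) \<otimes> finprod G (\<lambda>a. g a [^] card {i\<in>I. a \<in> F i}) S"
    using insert by simp
  also have "finprod G g (F j) = finprod G (\<lambda>a. if a \<in> F j then g a else \<one>) S"
    using insert.prems g S
    by (intro finprod_mono_neutral_cong_left) (auto simp: Pi_def)
  also have "finprod G (\<lambda>a. if a \<in> F j then g a else \<one>) S \<otimes> finprod G (\<lambda>a. g a [^] card {i\<in>I. a \<in> F i}) S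
      = finprod G (\<lambda>a. (if a \<in> F j then g a else \<one>) \<otimes> g a [^] card {i\<in>I. a \<in> F i}) S"
    using g by (subst finprod_multf) (auto simp: Pi_def)
  also have "\<dots> = finprod G (\<lambda>a. g a [^] card {i\<in>insert j I. a \<in> F i}) S"
  proof (rule finprod_cong')
    show "(\<lambda>a. g a [^] card {i\<in>insert j I. a \<in> F i}) \<in> S \<rightarrow> carrier G" using g by auto
    fix a assume a: "a \<in> S"
    have ga: "g a \<in> carrier G" using g a by auto
    show "(if a \<in> F j then g a else \<one>) \<otimes> g a [^] card {i\<in>I. a \<in> F i} = g a [^] card {i\<in>insert j I. a \<in> F i}"
    proof (cases "a \<in> F j")
      case True
      have "{i\<in>insert j I. a \<in> F i} = insert j {i\<in>I. a \<in> F i}" using True by auto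
      hence "card {i\<in>insert j I. a \<in> F i} = Suc (card {i\<in>I. a \<in> F i})"
        using insert.hyps by simp
      then show ?thesis using True ga by (simp add: nat_pow_mult[symmetric] nat_pow_Suc2[symmetric])
    next
      case False
      have "{i\<in>insert j I. a \<in> F i} = {i\<in>I. a \<in> F i}" using False by auto
      then show ?thesis using False ga by simp
    qed
  qed simp
  finally show ?case .
qed


lemma subgroup_lmult_image:
  assumes "group A" "subgroup F A" "g \<in> F"
  shows "(\<lambda>a. g \<otimes>\<^bsub>A\<^esub> a) ` F = F"
proof
  interpret A: group A by fact
  show "(\<lambda>a. g \<otimes>\<^bsub>A\<^esub> a) ` F \<subseteq> F" using assms subgroup.m_closed by fastforce
  show "F \<subseteq> (\<lambda>a. g \<otimes>\<^bsub>A\<^esub> a) ` F"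
  proof
    fix a assume a: "a \<in> F"
    have gc: "g \<in> carrier A" and ac: "a \<in> carrier A" using assms a subgroup.subset by blast+
    have "inv\<^bsub>A\<^esub> g \<otimes>\<^bsub>A\<^esub> a \<in> F" using assms a by (simp add: subgroup.m_closed subgroup.m_inv_closed)
    moreover have "a = g \<otimes>\<^bsub>A\<^esub> (inv\<^bsub>A\<^esub> g \<otimes>\<^bsub>A\<^esub> a)" using gc ac by (simp add: A.m_assoc[symmetric])
    ultimately show "a \<in> (\<lambda>a. g \<otimes>\<^bsub>A\<^esub> a) ` F" by blast
  qed
qed

lemma abelian_decomp:
  fixes V :: "('v, 'e) monoid_scheme" and A :: "('c, 'd) monoid_scheme"
    and \<beta> :: "'c \<Rightarrow> 'v \<Rightarrow> 'v" and As :: "nat \<Rightarrow> 'c set"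
  assumes V: "comm_group V" "finite (carrier V)" "coprime (order V) q"
    and A: "group A" "finite (carrier A)"
    and hom: "\<forall>a\<in>carrier A. \<beta> a \<in> hom V V"
    and comp: "\<forall>a\<in>carrier A. \<forall>b\<in>carrier A. \<forall>x\<in>carrier V. \<beta> (a \<otimes>\<^bsub>A\<^esub> b) x = \<beta> a (\<beta> b x)"
    and Bsub: "B \<subseteq> carrier A" "card B = q" and Btriv: "\<forall>b\<in>B. \<forall>x\<in>carrier V. \<beta> b x = x"
    and I: "finite I" and As: "\<forall>i\<in>I. subgroup (As i) A"
    and cnt: "\<forall>a\<in>carrier A. card {i\<in>I. a \<in> As i} = (if a \<in> B then q+1 else 1)"
    and x: "x \<in> carrier V"
  shows "\<exists>y0 y. y0 \<in> carrier V \<and> (\<forall>a\<in>carrier A. \<beta> a y0 = y0) \<and>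
     (\<forall>i\<in>I. y i \<in> carrier V \<and> (\<forall>a\<in>As i. \<beta> a (y i) = y i)) \<and> x = y0 \<otimes>\<^bsub>V\<^esub> finprod V y I"
proof -
  interpret V: comm_group V by fact
  interpret A: group A by fact
  have bc: "\<And>a y. a \<in> carrier A \<Longrightarrow> y \<in> carrier V \<Longrightarrow> \<beta> a y \<in> carrier V"
    using hom by (auto simp: hom_def)
  have gh: "\<And>a. a \<in> carrier A \<Longrightarrow> group_hom V V (\<beta> a)"
    using hom by (simp add: group_hom_axioms_def group_hom_def V.is_group)
  define T where "T F = finprod V (\<lambda>a. \<beta> a x) F" for F
  have Tc: "\<And>F. F \<subseteq> carrier A \<Longrightarrow> T F \<in> carrier V"
    unfolding T_def using bc x by (intro V.finprod_closed) auto
  have Tfix: "\<beta> g (T F) = T F" if F: "subgroup F A" and g: "g \<in> F" for F g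
  proof -
    have Fs: "F \<subseteq> carrier A" using F subgroup.subset by blast
    have gc: "g \<in> carrier A" using g Fs by auto
    have "\<beta> g (T F) = finprod V (\<lambda>a. \<beta> g (\<beta> a x)) F"
      unfolding T_def using hom gc Fs bc x by (intro V.hom_finprod) auto
    also have "\<dots> = finprod V (\<lambda>a. \<beta> (g \<otimes>\<^bsub>A\<^esub> a) x) F"
      using comp gc Fs x by (intro V.finprod_cong') (auto intro!: bc)
    also have "\<dots> = finprod V (\<lambda>a. \<beta> a x) ((\<lambda>a. g \<otimes>\<^bsub>A\<^esub> a) ` F)"
    proof -
      have inj: "inj_on (\<lambda>a. g \<otimes>\<^bsub>A\<^esub> a) F"
      proof (rule inj_onI)
        fix a b assume "a \<in> F" "b \<in> F" "g \<otimes>\<^bsub>A\<^esub> a = g \<otimes>\<^bsub>A\<^esub> b"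
        thus "a = b" using Fs gc A.l_cancel[of g a b] by auto
      qed
      show ?thesis using Fs gc bc x by (subst V.finprod_reindex[OF _ inj]) (auto simp: Pi_def)
    qed
    also have "\<dots> = T F" unfolding T_def using subgroup_lmult_image[OF A(1) F g] by simp
    finally show ?thesis .
  qed
  have AsA: "\<forall>i\<in>I. As i \<subseteq> carrier A" using As subgroup.subset by blast
  have bx: "(\<lambda>a. \<beta> a x) \<in> carrier A \<rightarrow> carrier V" using bc x by auto
  have step1: "finprod V (\<lambda>i. T (As i)) I = finprod V (\<lambda>a. (\<beta> a x) [^]\<^bsub>V\<^esub> card {i\<in>I. a \<in> As i}) (carrier A)"
    unfolding T_def by (rule V.finprod_count[OF I A(2) AsA bx])
  also have "\<dots> = finprod V (\<lambda>a. \<beta> a x \<otimes>\<^bsub>V\<^esub> (if a \<in> B then x [^]\<^bsub>V\<^esub> q else \<one>\<^bsub>V\<^esub>)) (carrier A)"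
  proof (rule V.finprod_cong')
    show "(\<lambda>a. \<beta> a x \<otimes>\<^bsub>V\<^esub> (if a \<in> B then x [^]\<^bsub>V\<^esub> q else \<one>\<^bsub>V\<^esub>)) \<in> carrier A \<rightarrow> carrier V"
      using bc x by auto
    fix a assume a: "a \<in> carrier A"
    show "(\<beta> a x) [^]\<^bsub>V\<^esub> card {i\<in>I. a \<in> As i} = \<beta> a x \<otimes>\<^bsub>V\<^esub> (if a \<in> B then x [^]\<^bsub>V\<^esub> q else \<one>\<^bsub>V\<^esub>)"
    proof (cases "a \<in> B")
      case True
      then show ?thesis using cnt a Btriv x by (simp add: V.m_comm)
    next
      case False
      then show ?thesis using cnt a bc x by simp
    qed
  qed simp
  also have "\<dots> = T (carrier A) \<otimes>\<^bsub>V\<^esub> finprod V (\<lambda>a. if a \<in> B then x [^]\<^bsub>V\<^esub> q else \<one>\<^bsub>V\<^esub>) (carrier A)"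
    unfolding T_def using bc x by (subst V.finprod_multf) (auto simp: Pi_def)
  also have "finprod V (\<lambda>a. if a \<in> B then x [^]\<^bsub>V\<^esub> q else \<one>\<^bsub>V\<^esub>) (carrier A) = finprod V (\<lambda>a. x [^]\<^bsub>V\<^esub> q) B"
    using Bsub A(2) x by (intro V.finprod_mono_neutral_cong_right) auto
  also have "\<dots> = x [^]\<^bsub>V\<^esub> (q * q)"
    using x Bsub by (simp add: V.finprod_const V.nat_pow_pow)
  finally have key: "finprod V (\<lambda>i. T (As i)) I = T (carrier A) \<otimes>\<^bsub>V\<^esub> x [^]\<^bsub>V\<^esub> (q * q)" .
  show ?thesis
  proof (cases "order V = 1")
    case True
    have "carrier V = {\<one>\<^bsub>V\<^esub>}" using True V.order_one_triv_iff by blast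
    hence x1: "x = \<one>\<^bsub>V\<^esub>" using x by auto
    have h1: "\<beta> a \<one>\<^bsub>V\<^esub> = \<one>\<^bsub>V\<^esub>" if "a \<in> carrier A" for a
      using group_hom.hom_one[OF gh[OF that]] .
    show ?thesis
      by (rule exI[of _ "\<one>\<^bsub>V\<^esub>"], rule exI[of _ "\<lambda>i. \<one>\<^bsub>V\<^esub>"])
         (use x1 h1 AsA in auto)
  next
    case False
    have "coprime (q * q) (order V)" using V(3) by (simp add: coprime_commute)
    then obtain r s where rs: "(q * q) * r = order V * s + 1"
      using coprime_bezout_strong[OF _ False] by blast
    define t where "t = T (carrier A)"
    have tc: "t \<in> carrier V" unfolding t_def by (rule Tc) simp
    have tfix: "\<forall>a\<in>carrier A. \<beta> a t = t" unfolding t_def using Tfix[OF A.subgroup_self] by blast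
    have TAc: "(\<lambda>i. T (As i)) \<in> I \<rightarrow> carrier V" using Tc AsA by auto
    have z: "x [^]\<^bsub>V\<^esub> (q * q) = inv\<^bsub>V\<^esub> t \<otimes>\<^bsub>V\<^esub> finprod V (\<lambda>i. T (As i)) I"
      using key tc x unfolding t_def by (simp add: V.m_assoc[symmetric])
    have "x = (x [^]\<^bsub>V\<^esub> (q * q)) [^]\<^bsub>V\<^esub> r"
    proof -
      have "(x [^]\<^bsub>V\<^esub> (q * q)) [^]\<^bsub>V\<^esub> r = x [^]\<^bsub>V\<^esub> (order V * s + 1)"
        using x rs by (simp add: V.nat_pow_pow)
      also have "\<dots> = (x [^]\<^bsub>V\<^esub> order V) [^]\<^bsub>V\<^esub> s \<otimes>\<^bsub>V\<^esub> x"
        using x by (simp add: V.nat_pow_pow V.nat_pow_mult[symmetric])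
      also have "\<dots> = x" using x V.pow_order_eq_1 by simp
      finally show ?thesis by simp
    qed
    also have "\<dots> = (inv\<^bsub>V\<^esub> t) [^]\<^bsub>V\<^esub> r \<otimes>\<^bsub>V\<^esub> finprod V (\<lambda>i. T (As i) [^]\<^bsub>V\<^esub> r) I"
      unfolding z using tc TAc
      by (simp add: V.pow_mult_distrib[OF V.m_comm] V.finprod_pow)
    finally have xe: "x = (inv\<^bsub>V\<^esub> t) [^]\<^bsub>V\<^esub> r \<otimes>\<^bsub>V\<^esub> finprod V (\<lambda>i. T (As i) [^]\<^bsub>V\<^esub> r) I" .
    show ?thesis
    proof (rule exI[of _ "(inv\<^bsub>V\<^esub> t) [^]\<^bsub>V\<^esub> r"], rule exI[of _ "\<lambda>i. T (As i) [^]\<^bsub>V\<^esub> r"], intro conjI ballI)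
      show "inv\<^bsub>V\<^esub> t [^]\<^bsub>V\<^esub> r \<in> carrier V" using tc by simp
      fix a assume a: "a \<in> carrier A"
      show "\<beta> a (inv\<^bsub>V\<^esub> t [^]\<^bsub>V\<^esub> r) = inv\<^bsub>V\<^esub> t [^]\<^bsub>V\<^esub> r"
        using tc tfix a group_hom.hom_nat_pow[OF gh[OF a]] group_hom.hom_inv[OF gh[OF a]] by simp
    next
      fix i assume i: "i \<in> I"
      show "T (As i) [^]\<^bsub>V\<^esub> r \<in> carrier V" using TAc i by auto
    next
      fix i a assume i: "i \<in> I" and a: "a \<in> As i"
      have ac: "a \<in> carrier A" using AsA i a by auto
      show "\<beta> a (T (As i) [^]\<^bsub>V\<^esub> r) = T (As i) [^]\<^bsub>V\<^esub> r"
      proof -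
        have "T (As i) \<in> carrier V" using TAc i by auto
        moreover have "\<beta> a (T (As i)) = T (As i)" using Tfix[of "As i" a] As a i by auto
        ultimately show ?thesis using group_hom.hom_nat_pow[OF gh[OF ac]] by simp
      qed
    next
      show "x = inv\<^bsub>V\<^esub> t [^]\<^bsub>V\<^esub> r \<otimes>\<^bsub>V\<^esub> finprod V (\<lambda>i. T (As i) [^]\<^bsub>V\<^esub> r) I" by (rule xe)
    qed
  qed
qed


lemma sub_nat_pow_closed:
  assumes "subgroup B A" "x \<in> B"
  shows "x [^]\<^bsub>A\<^esub> (n::nat) \<in> B"
proof (induct n)
  case 0
  then show ?case using assms by (simp add: subgroup.one_closed)
next
  case (Suc n)
  then show ?case using assms by (simp add: subgroup.m_closed)
qed

lemma pow_in_sub_imp: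
  assumes A: "group A" and q: "Factorial_Ring.prime q" and a: "a \<in> carrier A"
    and aq: "a [^]\<^bsub>A\<^esub> q = \<one>\<^bsub>A\<^esub>" and B: "subgroup B A"
    and d: "0 < d" "d < q" and ad: "a [^]\<^bsub>A\<^esub> (d::nat) \<in> B"
  shows "a \<in> B"
proof -
  interpret A: group A by fact
  have "coprime d q"
    using d q by (metis coprime_commute le_refl nat_less_le prime_imp_coprime_nat
        dvd_imp_le not_le)
  moreover have "q \<noteq> 1" using q by auto
  ultimately obtain u v where uv: "d * u = q * v + 1" using coprime_bezout_strong by blast
  have "(a [^]\<^bsub>A\<^esub> d) [^]\<^bsub>A\<^esub> u \<in> B" using ad B by (simp add: sub_nat_pow_closed)
  also have "(a [^]\<^bsub>A\<^esub> d) [^]\<^bsub>A\<^esub> u = a [^]\<^bsub>A\<^esub> (q * v + 1)" using a uv by (simp add: A.nat_pow_pow)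
  also have "\<dots> = (a [^]\<^bsub>A\<^esub> q) [^]\<^bsub>A\<^esub> v \<otimes>\<^bsub>A\<^esub> a" using a by (simp add: A.nat_pow_pow A.nat_pow_mult[symmetric])
  also have "\<dots> = a" using aq a by simp
  finally show ?thesis .
qed


lemma A_count:
  assumes q: "Factorial_Ring.prime q" and A: "group A" "finite (carrier A)"
    and exp: "\<forall>a\<in>carrier A. a [^]\<^bsub>A\<^esub> q = \<one>\<^bsub>A\<^esub>"
    and B: "subgroup B A" "card B = q" "B \<subseteq> group_center A"
    and bij: "bij_betw As {1..q+1} {S. subgroup S A \<and> card S = q ^ 2 \<and> B \<subseteq> S}"
    and a: "a \<in> carrier A"
  shows "card {i\<in>{1..q+1}. a \<in> As i} = (if a \<in> B then q+1 else 1)"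
proof -
  interpret A: group A by fact
  have AsP: "subgroup (As i) A \<and> card (As i) = q^2 \<and> B \<subseteq> As i" if "i \<in> {1..q+1}" for i
    using bij_betwE[OF bij] that by blast
  show ?thesis
  proof (cases "a \<in> B")
    case True
    hence "{i\<in>{1..q+1}. a \<in> As i} = {1..q+1}" using AsP by blast
    thus ?thesis using True by simp
  next
    case False
    have Bs: "B \<subseteq> carrier A" using B(1) subgroup.subset by blast
    have central: "b \<otimes>\<^bsub>A\<^esub> y = y \<otimes>\<^bsub>A\<^esub> b" if "b \<in> B" "y \<in> carrier A" for b y
      using B(3) that unfolding group_center_def by blast
    have q1: "q \<ge> 1" using q prime_ge_1_nat by blast
    define S where "S = {b \<otimes>\<^bsub>A\<^esub> a [^]\<^bsub>A\<^esub> (j::nat) | b j. b \<in> B}"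
    have Smem: "b \<otimes>\<^bsub>A\<^esub> a [^]\<^bsub>A\<^esub> (j::nat) \<in> S" if "b \<in> B" for b j
      unfolding S_def using that by blast
    have Ssub: "S \<subseteq> carrier A" unfolding S_def using Bs a by auto
    have Smult: "x \<otimes>\<^bsub>A\<^esub> y \<in> S" if xS: "x \<in> S" and yS: "y \<in> S" for x y
    proof -
      obtain b i where x: "b \<in> B" "x = b \<otimes>\<^bsub>A\<^esub> a [^]\<^bsub>A\<^esub> (i::nat)" using xS unfolding S_def by blast
      obtain b' j where y: "b' \<in> B" "y = b' \<otimes>\<^bsub>A\<^esub> a [^]\<^bsub>A\<^esub> (j::nat)" using yS unfolding S_def by blast
      have bc: "b \<in> carrier A" "b' \<in> carrier A" using x y Bs by auto
      have "x \<otimes>\<^bsub>A\<^esub> y = b \<otimes>\<^bsub>A\<^esub> (a [^]\<^bsub>A\<^esub> i \<otimes>\<^bsub>A\<^esub> b') \<otimes>\<^bsub>A\<^esub> a [^]\<^bsub>A\<^esub> j"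
        using x y bc a by (simp add: A.m_assoc)
      also have "a [^]\<^bsub>A\<^esub> i \<otimes>\<^bsub>A\<^esub> b' = b' \<otimes>\<^bsub>A\<^esub> a [^]\<^bsub>A\<^esub> i" using central[OF y(1), of "a [^]\<^bsub>A\<^esub> i"] a by simp
      also have "b \<otimes>\<^bsub>A\<^esub> (b' \<otimes>\<^bsub>A\<^esub> a [^]\<^bsub>A\<^esub> i) \<otimes>\<^bsub>A\<^esub> a [^]\<^bsub>A\<^esub> j = (b \<otimes>\<^bsub>A\<^esub> b') \<otimes>\<^bsub>A\<^esub> a [^]\<^bsub>A\<^esub> (i + j)"
        using bc a by (simp add: A.m_assoc A.nat_pow_mult)
      finally have eq: "x \<otimes>\<^bsub>A\<^esub> y = (b \<otimes>\<^bsub>A\<^esub> b') \<otimes>\<^bsub>A\<^esub> a [^]\<^bsub>A\<^esub> (i + j)" .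
      have "b \<otimes>\<^bsub>A\<^esub> b' \<in> B" using subgroup.m_closed[OF B(1) x(1) y(1)] .
      thus ?thesis using Smem eq by simp
    qed
    have Sinv: "inv\<^bsub>A\<^esub> x \<in> S" if xS: "x \<in> S" for x
    proof -
      obtain b i where x: "b \<in> B" "x = b \<otimes>\<^bsub>A\<^esub> a [^]\<^bsub>A\<^esub> (i::nat)" using xS unfolding S_def by blast
      have bc: "b \<in> carrier A" using x Bs by auto
      have ib: "inv\<^bsub>A\<^esub> b \<in> B" using subgroup.m_inv_closed[OF B(1) x(1)] .
      have "(inv\<^bsub>A\<^esub> b \<otimes>\<^bsub>A\<^esub> a [^]\<^bsub>A\<^esub> (i * (q - 1))) \<otimes>\<^bsub>A\<^esub> x =
            inv\<^bsub>A\<^esub> b \<otimes>\<^bsub>A\<^esub> (a [^]\<^bsub>A\<^esub> (i * (q - 1)) \<otimes>\<^bsub>A\<^esub> b) \<otimes>\<^bsub>A\<^esub> a [^]\<^bsub>A\<^esub> i"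
        using x bc a by (simp add: A.m_assoc)
      also have "a [^]\<^bsub>A\<^esub> (i * (q - 1)) \<otimes>\<^bsub>A\<^esub> b = b \<otimes>\<^bsub>A\<^esub> a [^]\<^bsub>A\<^esub> (i * (q - 1))"
        using central[OF x(1), of "a [^]\<^bsub>A\<^esub> (i * (q - 1))"] a by simp
      also have "inv\<^bsub>A\<^esub> b \<otimes>\<^bsub>A\<^esub> (b \<otimes>\<^bsub>A\<^esub> a [^]\<^bsub>A\<^esub> (i * (q - 1))) \<otimes>\<^bsub>A\<^esub> a [^]\<^bsub>A\<^esub> i
          = a [^]\<^bsub>A\<^esub> (i * (q - 1) + i)"
        using bc a by (simp add: A.m_assoc[symmetric] A.nat_pow_mult)
      also have "i * (q - 1) + i = q * i" using q1 by (simp add: algebra_simps)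
      also have "a [^]\<^bsub>A\<^esub> (q * i) = \<one>\<^bsub>A\<^esub>" using exp a by (simp add: A.nat_pow_pow[symmetric])
      finally have "inv\<^bsub>A\<^esub> x = inv\<^bsub>A\<^esub> b \<otimes>\<^bsub>A\<^esub> a [^]\<^bsub>A\<^esub> (i * (q - 1))"
        using x bc a by (intro A.inv_equality) auto
      thus ?thesis using Smem[OF ib] by simp
    qed
    have Sgrp: "subgroup S A"
    proof (rule A.subgroupI)
      show "S \<subseteq> carrier A" by (rule Ssub)
      have "\<one>\<^bsub>A\<^esub> \<otimes>\<^bsub>A\<^esub> a [^]\<^bsub>A\<^esub> (0::nat) \<in> S" using Smem B(1) subgroup.one_closed by blast
      thus "S \<noteq> {}" by blast
    qed (use Sinv Smult in auto)
    have powmod: "a [^]\<^bsub>A\<^esub> j = a [^]\<^bsub>A\<^esub> (j mod q)" for j :: nat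
    proof -
      have "(a [^]\<^bsub>A\<^esub> q) [^]\<^bsub>A\<^esub> (j div q) \<otimes>\<^bsub>A\<^esub> a [^]\<^bsub>A\<^esub> (j mod q) = a [^]\<^bsub>A\<^esub> (q * (j div q) + j mod q)"
        using a by (simp add: A.nat_pow_pow A.nat_pow_mult)
      hence "a [^]\<^bsub>A\<^esub> j = (a [^]\<^bsub>A\<^esub> q) [^]\<^bsub>A\<^esub> (j div q) \<otimes>\<^bsub>A\<^esub> a [^]\<^bsub>A\<^esub> (j mod q)" by simp
      also have "\<dots> = a [^]\<^bsub>A\<^esub> (j mod q)" using exp a by simp
      finally show ?thesis .
    qed
    define f where "f = (\<lambda>(b, j). b \<otimes>\<^bsub>A\<^esub> a [^]\<^bsub>A\<^esub> (j::nat))"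
    have Simg: "S = f ` (B \<times> {..<q})"
    proof
      show "f ` (B \<times> {..<q}) \<subseteq> S" unfolding f_def using Smem by auto
      show "S \<subseteq> f ` (B \<times> {..<q})"
      proof
        fix x assume "x \<in> S"
        then obtain b j where x: "b \<in> B" "x = b \<otimes>\<^bsub>A\<^esub> a [^]\<^bsub>A\<^esub> (j::nat)" unfolding S_def by blast
        have "x = f (b, j mod q)" unfolding f_def using x powmod[of j] by simp
        moreover have "j mod q < q" using q1 by simp
        ultimately show "x \<in> f ` (B \<times> {..<q})" using x(1) by blast
      qed
    qed
    have aux: "i = j \<and> b = b'"
      if b: "b \<in> B" "b' \<in> B" and ij: "i \<le> j" "j < q" and eq: "b \<otimes>\<^bsub>A\<^esub> a [^]\<^bsub>A\<^esub> (i::nat) = b' \<otimes>\<^bsub>A\<^esub> a [^]\<^bsub>A\<^esub> j" for b b' i j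
    proof -
      have bc: "b \<in> carrier A" "b' \<in> carrier A" using b Bs by auto
      have "a [^]\<^bsub>A\<^esub> j = a [^]\<^bsub>A\<^esub> (j - i) \<otimes>\<^bsub>A\<^esub> a [^]\<^bsub>A\<^esub> i"
        using a ij by (simp add: A.nat_pow_mult)
      hence "b \<otimes>\<^bsub>A\<^esub> a [^]\<^bsub>A\<^esub> i = (b' \<otimes>\<^bsub>A\<^esub> a [^]\<^bsub>A\<^esub> (j - i)) \<otimes>\<^bsub>A\<^esub> a [^]\<^bsub>A\<^esub> i"
        using eq bc a by (simp add: A.m_assoc)
      hence bb: "b = b' \<otimes>\<^bsub>A\<^esub> a [^]\<^bsub>A\<^esub> (j - i)"
        using bc a by (simp add: A.r_cancel)
      hence "a [^]\<^bsub>A\<^esub> (j - i) = inv\<^bsub>A\<^esub> b' \<otimes>\<^bsub>A\<^esub> b"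
        using bc a by (simp add: A.m_assoc[symmetric])
      moreover have "inv\<^bsub>A\<^esub> b' \<otimes>\<^bsub>A\<^esub> b \<in> B"
        using subgroup.m_closed[OF B(1) subgroup.m_inv_closed[OF B(1) b(2)] b(1)] .
      ultimately have inB: "a [^]\<^bsub>A\<^esub> (j - i) \<in> B" by simp
      have "j - i = 0"
      proof (rule ccontr)
        assume "j - i \<noteq> 0"
        hence "a \<in> B" using pow_in_sub_imp[OF A(1) q a _ B(1) _ _ inB] exp a ij by auto
        thus False using False by simp
      qed
      hence "i = j" using ij by simp
      thus ?thesis using bb bc by simp
    qed
    have finj: "inj_on f (B \<times> {..<q})"
    proof (rule inj_onI)
      fix u v assume u: "u \<in> B \<times> {..<q}" and v: "v \<in> B \<times> {..<q}" and fe: "f u = f v"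
      obtain b i where bi: "u = (b, i)" by (cases u)
      obtain b' j where bj: "v = (b', j)" by (cases v)
      have e: "b \<otimes>\<^bsub>A\<^esub> a [^]\<^bsub>A\<^esub> i = b' \<otimes>\<^bsub>A\<^esub> a [^]\<^bsub>A\<^esub> j" using fe bi bj unfolding f_def by simp
      show "u = v"
      proof (cases "i \<le> j")
        case True
        then show ?thesis using aux[of b b' i j] e u v bi bj by auto
      next
        case False
        then show ?thesis using aux[of b' b j i] e u v bi bj by auto
      qed
    qed
    have cardS: "card S = q ^ 2"
    proof -
      have "card S = card (B \<times> {..<q})" unfolding Simg by (rule card_image[OF finj])
      also have "\<dots> = q * q" using B(2) by (simp add: card_cartesian_product)
      finally show ?thesis by (simp add: power2_eq_square)
    qed
    have BS: "B \<subseteq> S"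
    proof
      fix b assume b: "b \<in> B"
      have "b = b \<otimes>\<^bsub>A\<^esub> a [^]\<^bsub>A\<^esub> (0::nat)" using b Bs by auto
      thus "b \<in> S" using Smem[OF b, of 0] by simp
    qed
    have aS: "a \<in> S"
    proof -
      have "a = \<one>\<^bsub>A\<^esub> \<otimes>\<^bsub>A\<^esub> a [^]\<^bsub>A\<^esub> (1::nat)" using a by simp
      thus ?thesis using Smem[OF subgroup.one_closed[OF B(1)], of 1] by simp
    qed
    have "S \<in> {S. subgroup S A \<and> card S = q ^ 2 \<and> B \<subseteq> S}" using Sgrp cardS BS by blast
    hence "S \<in> As ` {1..q+1}" using bij_betw_imp_surj_on[OF bij] by simp
    then obtain i where i: "i \<in> {1..q+1}" "As i = S" by (auto simp: image_iff)
    have "{k\<in>{1..q+1}. a \<in> As k} = {i}"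
    proof
      show "{i} \<subseteq> {k\<in>{1..q+1}. a \<in> As k}" using i aS by auto
      show "{k\<in>{1..q+1}. a \<in> As k} \<subseteq> {i}"
      proof
        fix k assume k: "k \<in> {k\<in>{1..q+1}. a \<in> As k}"
        have k1: "k \<in> {1..q+1}" and ak: "a \<in> As k" using k by auto
        have P: "subgroup (As k) A" "card (As k) = q^2" "B \<subseteq> As k" using AsP[OF k1] by auto
        have "S \<subseteq> As k"
        proof
          fix x assume "x \<in> S"
          then obtain b j where x: "b \<in> B" "x = b \<otimes>\<^bsub>A\<^esub> a [^]\<^bsub>A\<^esub> (j::nat)" unfolding S_def by blast
          have "b \<in> As k" using x(1) P(3) by auto
          moreover have "a [^]\<^bsub>A\<^esub> j \<in> As k" using sub_nat_pow_closed[OF P(1) ak] .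
          ultimately show "x \<in> As k" using x(2) subgroup.m_closed[OF P(1)] by simp
        qed
        moreover have "finite (As k)" using P(1) A(2) subgroup.subset finite_subset by blast
        ultimately have "S = As k" using P(2) cardS by (simp add: card_subset_eq)
        hence "As k = As i" using i by simp
        thus "k \<in> {i}" using bij_betw_imp_inj_on[OF bij] k1 i(1) by (simp add: inj_on_eq_iff)
      qed
    qed
    thus ?thesis using False by simp
  qed
qed


fun lprod :: "('a, 'b) monoid_scheme \<Rightarrow> 'a list \<Rightarrow> 'a" where
  "lprod G [] = \<one>\<^bsub>G\<^esub>"
| "lprod G (x # xs) = x \<otimes>\<^bsub>G\<^esub> lprod G xs"

lemma set_mult_mem_iff: "x \<in> S <#>\<^bsub>G\<^esub> T \<longleftrightarrow> (\<exists>s\<in>S. \<exists>t\<in>T. x = s \<otimes>\<^bsub>G\<^esub> t)"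
  unfolding set_mult_def by auto

lemma spl_mem:
  "list_all2 (\<lambda>y S. y \<in> S) ys Ss \<Longrightarrow> lprod G ys \<in> set_prod_list G Ss"
proof (induct ys arbitrary: Ss)
  case Nil
  then show ?case by simp
next
  case (Cons y ys)
  then obtain S Ss' where Ss: "Ss = S # Ss'" "y \<in> S" "list_all2 (\<lambda>y S. y \<in> S) ys Ss'"
    by (cases Ss) auto
  then show ?case using Cons(1)[OF Ss(3)] by (auto simp: set_mult_mem_iff)
qed

lemma spl_memD:
  "z \<in> set_prod_list G Ss \<Longrightarrow> \<exists>ys. list_all2 (\<lambda>y S. y \<in> S) ys Ss \<and> z = lprod G ys"
proof (induct Ss arbitrary: z)
  case Nil
  then show ?case by (intro exI[of _ "[]"]) simp
next
  case (Cons S Ss)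
  then obtain y w where yw: "y \<in> S" "w \<in> set_prod_list G Ss" "z = y \<otimes>\<^bsub>G\<^esub> w"
    by (auto simp: set_mult_mem_iff)
  then obtain ys where "list_all2 (\<lambda>y S. y \<in> S) ys Ss" "w = lprod G ys" using Cons(1) by blast
  then show ?case using yw by (intro exI[of _ "y # ys"]) simp
qed

lemma lprod_sub:
  assumes "subgroup H G" "set ys \<subseteq> H"
  shows "lprod G ys \<in> H"
  using assms(2)
proof (induct ys)
  case Nil
  then show ?case using assms(1) subgroup.one_closed by simp
next
  case (Cons y ys)
  then have "y \<in> H" "lprod G ys \<in> H" by auto
  then show ?case using subgroup.m_closed[OF assms(1)] by simp
qed

lemma list_all2_sub_set:
  assumes "list_all2 (\<lambda>y S. y \<in> S) ys Ss" "\<forall>S\<in>set Ss. S \<subseteq> H"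
  shows "set ys \<subseteq> H"
  using assms
proof (induct ys arbitrary: Ss)
  case Nil
  then show ?case by simp
next
  case (Cons y ys)
  then obtain S Ss' where "Ss = S # Ss'" "y \<in> S" "list_all2 (\<lambda>y S. y \<in> S) ys Ss'"
    by (cases Ss) auto
  then show ?case using Cons by auto
qed


locale cs =
  fixes A :: "('c, 'd) monoid_scheme" and G :: "('a, 'b) monoid_scheme"
    and \<alpha> :: "'c \<Rightarrow> 'a \<Rightarrow> 'a" and q :: nat and B :: "'c set" and As :: "nat \<Rightarrow> 'c set"
  assumes q: "Factorial_Ring.prime q"
    and A: "group A" and finA: "finite (carrier A)" and ordA: "order A = q ^ 3"
    and exp: "\<forall>a \<in> carrier A. a [^]\<^bsub>A\<^esub> q = \<one>\<^bsub>A\<^esub>"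
    and B: "subgroup B A" and cardB: "card B = q" and BZ: "B \<subseteq> group_center A"
    and G: "group G" and finG: "finite (carrier G)" and copG: "coprime (order G) q"
    and act: "acts_by_automorphisms A G \<alpha>"
    and bij: "bij_betw As {1..q+1} {S. subgroup S A \<and> card S = q ^ 2 \<and> B \<subseteq> S}"
begin

sublocale Ag: group A by (rule A)
sublocale Gg: group G by (rule G)

lemma ga: "group_action A (carrier G) \<alpha>" using act unfolding acts_by_automorphisms_def by blast

lemma \<alpha>hom: "a \<in> carrier A \<Longrightarrow> \<alpha> a \<in> hom G G" using act unfolding acts_by_automorphisms_def by blast

lemma \<alpha>gh: "a \<in> carrier A \<Longrightarrow> group_hom G G (\<alpha> a)"
  using \<alpha>hom G by (simp add: group_hom_axioms_def group_hom_def)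

lemma \<alpha>c: "a \<in> carrier A \<Longrightarrow> x \<in> carrier G \<Longrightarrow> \<alpha> a x \<in> carrier G"
  using \<alpha>hom by (auto simp: hom_def)

lemma \<alpha>mult: "a \<in> carrier A \<Longrightarrow> x \<in> carrier G \<Longrightarrow> y \<in> carrier G \<Longrightarrow>
    \<alpha> a (x \<otimes>\<^bsub>G\<^esub> y) = \<alpha> a x \<otimes>\<^bsub>G\<^esub> \<alpha> a y"
  using \<alpha>hom by (auto simp: hom_def)

lemma \<alpha>inv: "a \<in> carrier A \<Longrightarrow> x \<in> carrier G \<Longrightarrow> \<alpha> a (inv\<^bsub>G\<^esub> x) = inv\<^bsub>G\<^esub> (\<alpha> a x)"
  using group_hom.hom_inv[OF \<alpha>gh] by blast

lemma \<alpha>one: "a \<in> carrier A \<Longrightarrow> \<alpha> a \<one>\<^bsub>G\<^esub> = \<one>\<^bsub>G\<^esub>"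
  using group_hom.hom_one[OF \<alpha>gh] by blast

lemma \<alpha>comp: "a \<in> carrier A \<Longrightarrow> b \<in> carrier A \<Longrightarrow> x \<in> carrier G \<Longrightarrow>
    \<alpha> (a \<otimes>\<^bsub>A\<^esub> b) x = \<alpha> a (\<alpha> b x)"
  using group_action.composition_rule[OF ga] by blast

lemma \<alpha>id: "x \<in> carrier G \<Longrightarrow> \<alpha> \<one>\<^bsub>A\<^esub> x = x"
  using group_action.id_eq_one[OF ga] by (metis restrict_apply')

lemma \<alpha>inj: "a \<in> carrier A \<Longrightarrow> inj_on (\<alpha> a) (carrier G)"
  using group_action.inj_prop[OF ga] by blast

lemma \<alpha>surj_sub:
  assumes "a \<in> carrier A" "N \<subseteq> carrier G" "\<alpha> a ` N \<subseteq> N"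
  shows "\<alpha> a ` N = N"
proof -
  have "finite N" using assms(2) finG finite_subset by blast
  moreover have "inj_on (\<alpha> a) N" using \<alpha>inj[OF assms(1)] assms(2) inj_on_subset by blast
  ultimately show ?thesis using endo_inj_surj assms(3) by blast
qed

lemma AsP: "i \<in> {1..q+1} \<Longrightarrow> subgroup (As i) A \<and> card (As i) = q^2 \<and> B \<subseteq> As i"
  using bij_betwE[OF bij] by blast

lemma cnt: "a \<in> carrier A \<Longrightarrow> card {i\<in>{1..q+1}. a \<in> As i} = (if a \<in> B then q+1 else 1)"
  using A_count[OF q A finA exp B cardB BZ bij] by blast

lemma card_sub_coprime:
  assumes "subgroup H G"
  shows "coprime (card H) q"
proof -
  have "card (rcosets\<^bsub>G\<^esub> H) * card H = order G" using Gg.lagrange[OF assms] .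
  hence "card H dvd order G" by (metis dvd_triv_right)
  thus ?thesis using copG coprime_imp_coprime dvd_trans by blast
qed

end


context cs begin

lemma lift_fixed:
  assumes N: "subgroup N G" and F: "subgroup F A" and ordF: "card F = q ^ k"
    and y1: "y1 \<in> carrier G" and inv: "\<forall>a\<in>F. \<alpha> a ` (N #>\<^bsub>G\<^esub> y1) = N #>\<^bsub>G\<^esub> y1"
  shows "\<exists>y\<in>N #>\<^bsub>G\<^esub> y1. \<forall>a\<in>F. \<alpha> a y = y"
proof -
  interpret ia: group_action "A\<lparr>carrier := F\<rparr>" "carrier G" \<alpha>
    using group_action.induced_action[OF ga F] .
  have Ns: "N \<subseteq> carrier G" using N subgroup.subset by blast
  have Ys: "N #>\<^bsub>G\<^esub> y1 \<subseteq> carrier G" using Gg.r_coset_subset_G[OF Ns y1] .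
  have "card (N #>\<^bsub>G\<^esub> y1) = card N"
    using Gg.card_rcosets_equal[OF Gg.rcosetsI[OF Ns y1] Ns] by simp
  moreover have "coprime (card N) q" using card_sub_coprime[OF N] .
  ultimately have nd: "\<not> q dvd card (N #>\<^bsub>G\<^esub> y1)"
    using q by (metis coprime_absorb_right not_prime_unit)
  have fF: "finite F" using F finA subgroup.subset finite_subset by blast
  have "\<exists>y\<in>N #>\<^bsub>G\<^esub> y1. \<forall>a\<in>carrier (A\<lparr>carrier := F\<rparr>). \<alpha> a y = y"
  proof (rule ia.fixed_point_exists[OF _ finG _ q Ys _ nd])
    show "finite (carrier (A\<lparr>carrier := F\<rparr>))" using fF by simp
    show "order (A\<lparr>carrier := F\<rparr>) = q ^ k" using ordF unfolding order_def by simp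
    show "\<forall>g\<in>carrier (A\<lparr>carrier := F\<rparr>). \<forall>x\<in>N #>\<^bsub>G\<^esub> y1. \<alpha> g x \<in> N #>\<^bsub>G\<^esub> y1"
      using inv by auto
  qed
  thus ?thesis by simp
qed

end


lemma list_all2_map_same:
  "(\<forall>j\<in>set js. z j \<in> C j) \<Longrightarrow> list_all2 (\<lambda>y S. y \<in> S) (map z js) (map C js)"
  by (induct js) auto

context cs begin

lemma quotient_step:
  assumes M: "subgroup M G" and N: "subgroup N G" and NM: "N \<subseteq> M"
    and Nn: "\<forall>m\<in>M. \<forall>n\<in>N. m \<otimes>\<^bsub>G\<^esub> n \<otimes>\<^bsub>G\<^esub> inv\<^bsub>G\<^esub> m \<in> N"
    and Mc: "\<forall>x\<in>M. \<forall>y\<in>M. x \<otimes>\<^bsub>G\<^esub> y \<otimes>\<^bsub>G\<^esub> inv\<^bsub>G\<^esub> x \<otimes>\<^bsub>G\<^esub> inv\<^bsub>G\<^esub> y \<in> N"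
    and Mi: "\<forall>a\<in>carrier A. \<alpha> a ` M \<subseteq> M" and Ni: "\<forall>a\<in>carrier A. \<alpha> a ` N \<subseteq> N"
    and Bt: "\<forall>b\<in>B. \<forall>x\<in>M. \<alpha> b x = x"
    and x: "x \<in> M"
  shows "\<exists>ws. list_all2 (\<lambda>y S. y \<in> S) ws (map (\<lambda>i. fixed_points \<alpha> (As i) M) [1..<q+2])
           \<and> (\<exists>n\<in>N. x = lprod G ws \<otimes>\<^bsub>G\<^esub> n)"
proof -
  define GM where "GM = G\<lparr>carrier := M\<rparr>"
  have Ms: "M \<subseteq> carrier G" using M subgroup.subset by blast
  have Ns: "N \<subseteq> carrier G" using N subgroup.subset by blast
  have gGM: "group GM" unfolding GM_def using Gg.subgroup_imp_group[OF M] .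
  have NGM: "subgroup N GM" unfolding GM_def using Gg.subgroup_incl[OF N M NM] .
  have nGM: "N \<lhd> GM"
  proof -
    have "\<forall>y\<in>carrier GM. \<forall>h\<in>N. y \<otimes>\<^bsub>GM\<^esub> h \<otimes>\<^bsub>GM\<^esub> inv\<^bsub>GM\<^esub> y \<in> N"
      unfolding GM_def using Nn Gg.m_inv_consistent[OF M] by simp
    thus ?thesis using group.normal_inv_iff[OF gGM] NGM by blast
  qed
  interpret nN: normal N GM by (rule nGM)
  define V where "V = GM Mod N"
  have gV: "group V" unfolding V_def by (rule nN.factorgroup_is_group)
  have carV: "carrier V = (\<lambda>m. N #>\<^bsub>G\<^esub> m) ` M"
    unfolding V_def GM_def carrier_FactGroup by simp
  have multV: "\<And>U Y. U \<otimes>\<^bsub>V\<^esub> Y = U <#>\<^bsub>G\<^esub> Y" unfolding V_def GM_def by simp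
  have oneV: "\<one>\<^bsub>V\<^esub> = N" unfolding V_def by simp
  have rsum: "(N #>\<^bsub>G\<^esub> m1) <#>\<^bsub>G\<^esub> (N #>\<^bsub>G\<^esub> m2) = N #>\<^bsub>G\<^esub> (m1 \<otimes>\<^bsub>G\<^esub> m2)"
    if "m1 \<in> M" "m2 \<in> M" for m1 m2
    using nN.rcos_sum[of m1 m2] that unfolding GM_def by simp
  have rind: "N #>\<^bsub>G\<^esub> m = N #>\<^bsub>G\<^esub> m'" if "m \<in> carrier G" "m' \<in> N #>\<^bsub>G\<^esub> m" for m m'
    using Gg.repr_independence[OF that(2) that(1) N] .
  have mem_rcos: "n \<otimes>\<^bsub>G\<^esub> m \<in> N #>\<^bsub>G\<^esub> m" if "n \<in> N" for n m
    using that unfolding r_coset_def by blast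
  have cV: "comm_group V"
  proof (rule group.group_comm_groupI[OF gV])
    fix U Y assume U: "U \<in> carrier V" and Y: "Y \<in> carrier V"
    obtain m1 where m1: "m1 \<in> M" "U = N #>\<^bsub>G\<^esub> m1" using U carV by auto
    obtain m2 where m2: "m2 \<in> M" "Y = N #>\<^bsub>G\<^esub> m2" using Y carV by auto
    have c1: "m1 \<in> carrier G" "m2 \<in> carrier G" using m1 m2 Ms by auto
    have eq: "m1 \<otimes>\<^bsub>G\<^esub> m2 = (m1 \<otimes>\<^bsub>G\<^esub> m2 \<otimes>\<^bsub>G\<^esub> inv\<^bsub>G\<^esub> m1 \<otimes>\<^bsub>G\<^esub> inv\<^bsub>G\<^esub> m2) \<otimes>\<^bsub>G\<^esub> (m2 \<otimes>\<^bsub>G\<^esub> m1)"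
    proof -
      have e1: "inv\<^bsub>G\<^esub> m2 \<otimes>\<^bsub>G\<^esub> (m2 \<otimes>\<^bsub>G\<^esub> m1) = m1" using c1 by (simp add: Gg.m_assoc[symmetric])
      show ?thesis using c1 e1 by (simp add: Gg.m_assoc)
    qed
    have cN: "m1 \<otimes>\<^bsub>G\<^esub> m2 \<otimes>\<^bsub>G\<^esub> inv\<^bsub>G\<^esub> m1 \<otimes>\<^bsub>G\<^esub> inv\<^bsub>G\<^esub> m2 \<in> N" using Mc m1 m2 by blast
    have "m1 \<otimes>\<^bsub>G\<^esub> m2 \<in> N #>\<^bsub>G\<^esub> (m2 \<otimes>\<^bsub>G\<^esub> m1)"
      by (subst eq) (rule mem_rcos[OF cN])
    hence "N #>\<^bsub>G\<^esub> (m2 \<otimes>\<^bsub>G\<^esub> m1) = N #>\<^bsub>G\<^esub> (m1 \<otimes>\<^bsub>G\<^esub> m2)" using rind[OF Gg.m_closed[OF c1(2) c1(1)]] by blast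
    thus "U \<otimes>\<^bsub>V\<^esub> Y = Y \<otimes>\<^bsub>V\<^esub> U" using multV rsum m1 m2 by simp
  qed
  interpret cV: comm_group V by (rule cV)
  have rcos_img: "N #>\<^bsub>G\<^esub> m = (\<lambda>h. h \<otimes>\<^bsub>G\<^esub> m) ` N" for m
    unfolding r_coset_def by auto
  have finV: "finite (carrier V)" unfolding carV using M finG Ms finite_subset by blast
  have copV: "coprime (order V) q"
  proof -
    have "card (rcosets\<^bsub>GM\<^esub> N) * card N = order GM" using group.lagrange[OF gGM NGM] .
    moreover have "order GM = card M" unfolding GM_def order_def by simp
    moreover have "order V = card (rcosets\<^bsub>GM\<^esub> N)" unfolding V_def order_def FactGroup_def by simp
    ultimately have "order V dvd card M" by (metis dvd_triv_left)
    thus ?thesis using card_sub_coprime[OF M] coprime_imp_coprime dvd_trans by blast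
  qed
  have aN: "\<alpha> a ` N = N" if "a \<in> carrier A" for a using \<alpha>surj_sub[OF that Ns] Ni that by blast
  have \<alpha>M: "\<alpha> a m \<in> M" if "a \<in> carrier A" "m \<in> M" for a m using Mi that by blast
  have \<beta>cos: "\<alpha> a ` (N #>\<^bsub>G\<^esub> m) = N #>\<^bsub>G\<^esub> \<alpha> a m" if a: "a \<in> carrier A" and m: "m \<in> M" for a m
  proof -
    have mc: "m \<in> carrier G" using m Ms by auto
    have "\<alpha> a ` (N #>\<^bsub>G\<^esub> m) = (\<lambda>h. \<alpha> a (h \<otimes>\<^bsub>G\<^esub> m)) ` N" unfolding rcos_img by (simp add: image_image)
    also have "\<dots> = (\<lambda>h. \<alpha> a h \<otimes>\<^bsub>G\<^esub> \<alpha> a m) ` N"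
      using \<alpha>mult[OF a _ mc] Ns by (intro image_cong) auto
    also have "\<dots> = (\<lambda>h. h \<otimes>\<^bsub>G\<^esub> \<alpha> a m) ` (\<alpha> a ` N)" by (simp add: image_image)
    also have "\<dots> = N #>\<^bsub>G\<^esub> \<alpha> a m" unfolding aN[OF a] rcos_img ..
    finally show ?thesis .
  qed
  define \<beta> where "\<beta> a U = \<alpha> a ` U" for a U
  have \<beta>hom: "\<forall>a\<in>carrier A. \<beta> a \<in> hom V V"
  proof
    fix a assume a: "a \<in> carrier A"
    show "\<beta> a \<in> hom V V"
      unfolding hom_def
    proof (intro CollectI conjI ballI)
      show "\<beta> a \<in> carrier V \<rightarrow> carrier V"
        using \<beta>cos[OF a] \<alpha>M[OF a] unfolding \<beta>_def carV by auto
      fix U W assume U: "U \<in> carrier V" and W: "W \<in> carrier V"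
      obtain m1 where m1: "m1 \<in> M" "U = N #>\<^bsub>G\<^esub> m1" using U carV by auto
      obtain m2 where m2: "m2 \<in> M" "W = N #>\<^bsub>G\<^esub> m2" using W carV by auto
      have c: "m1 \<in> carrier G" "m2 \<in> carrier G" using m1 m2 Ms by auto
      have "\<beta> a (U \<otimes>\<^bsub>V\<^esub> W) = N #>\<^bsub>G\<^esub> \<alpha> a (m1 \<otimes>\<^bsub>G\<^esub> m2)"
        unfolding \<beta>_def multV m1(2) m2(2) rsum[OF m1(1) m2(1)]
        using \<beta>cos[OF a subgroup.m_closed[OF M m1(1) m2(1)]] .
      also have "\<dots> = (N #>\<^bsub>G\<^esub> \<alpha> a m1) <#>\<^bsub>G\<^esub> (N #>\<^bsub>G\<^esub> \<alpha> a m2)"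
        using \<alpha>mult[OF a c] rsum[OF \<alpha>M[OF a m1(1)] \<alpha>M[OF a m2(1)]] by simp
      also have "\<dots> = \<beta> a U \<otimes>\<^bsub>V\<^esub> \<beta> a W"
        unfolding \<beta>_def multV m1(2) m2(2) \<beta>cos[OF a m1(1)] \<beta>cos[OF a m2(1)] ..
      finally show "\<beta> a (U \<otimes>\<^bsub>V\<^esub> W) = \<beta> a U \<otimes>\<^bsub>V\<^esub> \<beta> a W" .
    qed
  qed
  have \<beta>comp: "\<forall>a\<in>carrier A. \<forall>b\<in>carrier A. \<forall>U\<in>carrier V. \<beta> (a \<otimes>\<^bsub>A\<^esub> b) U = \<beta> a (\<beta> b U)"
  proof (intro ballI)
    fix a b U assume a: "a \<in> carrier A" and b: "b \<in> carrier A" and U: "U \<in> carrier V"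
    have "U \<subseteq> carrier G" using U carV Gg.r_coset_subset_G[OF Ns] Ms by auto
    thus "\<beta> (a \<otimes>\<^bsub>A\<^esub> b) U = \<beta> a (\<beta> b U)"
      unfolding \<beta>_def image_image using \<alpha>comp[OF a b] by (intro image_cong) auto
  qed
  have \<beta>B: "\<forall>b\<in>B. \<forall>U\<in>carrier V. \<beta> b U = U"
  proof (intro ballI)
    fix b U assume b: "b \<in> B" and U: "U \<in> carrier V"
    obtain m where m: "m \<in> M" "U = N #>\<^bsub>G\<^esub> m" using U carV by auto
    have bA: "b \<in> carrier A" using b B subgroup.subset by blast
    show "\<beta> b U = U" unfolding \<beta>_def m(2) \<beta>cos[OF bA m(1)] using Bt b m(1) by simp
  qed
  have BA: "B \<subseteq> carrier A" using B subgroup.subset by blast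
  have AsI: "\<forall>i\<in>{1..q+1}. subgroup (As i) A" using AsP by blast
  have cntI: "\<forall>a\<in>carrier A. card {i\<in>{1..q+1}. a \<in> As i} = (if a \<in> B then q+1 else 1)" using cnt by blast
  have x0: "N #>\<^bsub>G\<^esub> x \<in> carrier V" using carV x by blast
  obtain y0 y where yy: "y0 \<in> carrier V" "\<forall>a\<in>carrier A. \<beta> a y0 = y0"
      "\<forall>i\<in>{1..q+1}. y i \<in> carrier V \<and> (\<forall>a\<in>As i. \<beta> a (y i) = y i)"
      "N #>\<^bsub>G\<^esub> x = y0 \<otimes>\<^bsub>V\<^esub> finprod V y {1..q+1}"
    using abelian_decomp[OF cV finV copV A finA \<beta>hom \<beta>comp BA cardB \<beta>B _ AsI cntI x0] by blast
  have lift: "\<exists>z\<in>M. U = N #>\<^bsub>G\<^esub> z \<and> (\<forall>a\<in>F. \<alpha> a z = z)"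
    if U: "U \<in> carrier V" and F: "subgroup F A" and cF: "card F = q ^ k" and fx: "\<forall>a\<in>F. \<beta> a U = U" for U F k
  proof -
    obtain m where m: "m \<in> M" "U = N #>\<^bsub>G\<^esub> m" using U carV by auto
    have mc: "m \<in> carrier G" using m Ms by auto
    obtain z where z: "z \<in> N #>\<^bsub>G\<^esub> m" "\<forall>a\<in>F. \<alpha> a z = z"
      using lift_fixed[OF N F cF mc] fx m(2) unfolding \<beta>_def by blast
    have "N #>\<^bsub>G\<^esub> m \<subseteq> M"
      using m(1) NM subgroup.m_closed[OF M] unfolding r_coset_def by auto
    hence "z \<in> M" using z(1) by auto
    moreover have "U = N #>\<^bsub>G\<^esub> z" using rind[OF mc z(1)] m(2) by simp
    ultimately show ?thesis using z(2) by blast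
  qed
  have cA: "card (carrier A) = q ^ 3" using ordA unfolding order_def .
  obtain z0 where z0: "z0 \<in> M" "y0 = N #>\<^bsub>G\<^esub> z0" "\<forall>a\<in>carrier A. \<alpha> a z0 = z0"
    using lift[OF yy(1) Ag.subgroup_self cA yy(2)] by blast
  have "\<forall>i\<in>{1..q+1}. \<exists>zi. zi \<in> M \<and> y i = N #>\<^bsub>G\<^esub> zi \<and> (\<forall>a\<in>As i. \<alpha> a zi = zi)"
  proof
    fix i assume i: "i \<in> {1..q+1}"
    show "\<exists>zi. zi \<in> M \<and> y i = N #>\<^bsub>G\<^esub> zi \<and> (\<forall>a\<in>As i. \<alpha> a zi = zi)"
    proof -
      have yi: "y i \<in> carrier V" and fi: "\<forall>a\<in>As i. \<beta> a (y i) = y i" using yy(3) i by auto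
      have s: "subgroup (As i) A" and c: "card (As i) = q ^ 2" using AsP[OF i] by auto
      show ?thesis using lift[OF yi s c fi] by blast
    qed
  qed
  hence "\<exists>f. \<forall>i\<in>{1..q+1}. f i \<in> M \<and> y i = N #>\<^bsub>G\<^esub> f i \<and> (\<forall>a\<in>As i. \<alpha> a (f i) = f i)"
    by (rule bchoice)
  then obtain z where z: "\<forall>i\<in>{1..q+1}. z i \<in> M \<and> y i = N #>\<^bsub>G\<^esub> z i \<and> (\<forall>a\<in>As i. \<alpha> a (z i) = z i)"
    by blast
  have fpc: "finprod V (\<lambda>i. N #>\<^bsub>G\<^esub> z i) (set js) = N #>\<^bsub>G\<^esub> lprod G (map z js)"
    if "distinct js" "set js \<subseteq> {1..q+1}" for js
    using that
  proof (induct js)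
    case Nil
    then show ?case using oneV Gg.coset_mult_one[OF Ns] by simp
  next
    case (Cons j js)
    have zj: "z j \<in> M" using z Cons.prems by auto
    have zs: "set (map z js) \<subseteq> M" using z Cons.prems by auto
    have lp: "lprod G (map z js) \<in> M" using lprod_sub[OF M zs] .
    have fc: "(\<lambda>i. N #>\<^bsub>G\<^esub> z i) \<in> set js \<rightarrow> carrier V" using z Cons.prems carV by auto
    have "finprod V (\<lambda>i. N #>\<^bsub>G\<^esub> z i) (set (j # js)) = finprod V (\<lambda>i. N #>\<^bsub>G\<^esub> z i) (insert j (set js))"
      by simp
    also have "\<dots> = (N #>\<^bsub>G\<^esub> z j) \<otimes>\<^bsub>V\<^esub> finprod V (\<lambda>i. N #>\<^bsub>G\<^esub> z i) (set js)"
      by (rule cV.finprod_insert) (use Cons.prems fc carV zj in auto)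
    also have "\<dots> = (N #>\<^bsub>G\<^esub> z j) <#>\<^bsub>G\<^esub> (N #>\<^bsub>G\<^esub> lprod G (map z js))"
      using Cons by (simp add: multV)
    also have "\<dots> = N #>\<^bsub>G\<^esub> lprod G (map z (j # js))" using rsum[OF zj lp] by simp
    finally show ?case .
  qed
  have setI: "set [1..<q+2] = {1..q+1}" by auto
  have "finprod V y {1..q+1} = finprod V (\<lambda>i. N #>\<^bsub>G\<^esub> z i) {1..q+1}"
    using z carV by (intro cV.finprod_cong') auto
  also have "\<dots> = N #>\<^bsub>G\<^esub> lprod G (map z [1..<q+2])" 
  proof -
    have d: "distinct [1..<q+2]" by (rule distinct_upt)
    have ss: "set [1..<q+2] \<subseteq> {1..q+1}" unfolding setI ..
    show ?thesis using fpc[OF d ss] unfolding setI .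
  qed
  finally have fp: "finprod V y {1..q+1} = N #>\<^bsub>G\<^esub> lprod G (map z [1..<q+2])" .
  have zs: "set (map z [1..<q+2]) \<subseteq> M" using z setI by auto
  have lpM: "lprod G (map z [1..<q+2]) \<in> M" using lprod_sub[OF M zs] .
  define w where "w = z0 \<otimes>\<^bsub>G\<^esub> lprod G (map z [1..<q+2])"
  have wM: "w \<in> M" unfolding w_def using subgroup.m_closed[OF M z0(1) lpM] .
  have wc: "w \<in> carrier G" using wM Ms by auto
  have "N #>\<^bsub>G\<^esub> x = N #>\<^bsub>G\<^esub> w"
    using yy(4) z0(2) fp multV rsum[OF z0(1) lpM] unfolding w_def by simp
  moreover have "x \<in> N #>\<^bsub>G\<^esub> x" using Gg.rcos_self[OF _ N] x Ms by auto
  ultimately have "x \<in> N #>\<^bsub>G\<^esub> w" by simp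
  then obtain n where n: "n \<in> N" "x = n \<otimes>\<^bsub>G\<^esub> w" unfolding r_coset_def by blast
  have nc: "n \<in> carrier G" using n Ns by auto
  define n' where "n' = inv\<^bsub>G\<^esub> w \<otimes>\<^bsub>G\<^esub> n \<otimes>\<^bsub>G\<^esub> w"
  have "inv\<^bsub>G\<^esub> w \<otimes>\<^bsub>G\<^esub> n \<otimes>\<^bsub>G\<^esub> inv\<^bsub>G\<^esub> (inv\<^bsub>G\<^esub> w) \<in> N"
    using Nn subgroup.m_inv_closed[OF M wM] n(1) by blast
  hence n'N: "n' \<in> N" unfolding n'_def using wc by simp
  have xw: "x = w \<otimes>\<^bsub>G\<^esub> n'"
    unfolding n'_def n(2) using wc nc by (simp add: Gg.m_assoc[symmetric])
  define ws where "ws = (z0 \<otimes>\<^bsub>G\<^esub> z 1) # map z [2..<q+2]"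
  have upt: "[1..<q+2] = 1 # [2..<q+2]"
  proof -
    have "[1..<q+2] = 1 # [Suc 1..<q+2]" by (rule upt_conv_Cons) simp
    thus ?thesis by (simp only: Suc_1)
  qed
  have z1: "z 1 \<in> M" using z by auto
  have zs2: "set (map z [2..<q+2]) \<subseteq> M" using z by auto
  have "lprod G ws = w"
  proof -
    have l2: "lprod G (map z [2..<q+2]) \<in> carrier G" using lprod_sub[OF M zs2] Ms by auto
    have c0: "z0 \<in> carrier G" "z 1 \<in> carrier G" using z0(1) z1 Ms by auto
    show ?thesis unfolding ws_def w_def upt list.map lprod.simps by (rule Gg.m_assoc[OF c0 l2])
  qed
  moreover have "list_all2 (\<lambda>y S. y \<in> S) ws (map (\<lambda>i. fixed_points \<alpha> (As i) M) [1..<q+2])"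
  proof -
    have As1: "As 1 \<subseteq> carrier A" using AsP[of 1] subgroup.subset by auto
    have "z0 \<otimes>\<^bsub>G\<^esub> z 1 \<in> fixed_points \<alpha> (As 1) M"
      unfolding fixed_points_def
    proof (intro CollectI conjI ballI)
      show "z0 \<otimes>\<^bsub>G\<^esub> z 1 \<in> M" using subgroup.m_closed[OF M z0(1) z1] .
      fix a assume a: "a \<in> As 1"
      have aA: "a \<in> carrier A" using a As1 by auto
      show "\<alpha> a (z0 \<otimes>\<^bsub>G\<^esub> z 1) = z0 \<otimes>\<^bsub>G\<^esub> z 1"
      proof -
        have c0: "z0 \<in> carrier G" "z 1 \<in> carrier G" using z0(1) z1 Ms by auto
        have "\<alpha> a (z 1) = z 1" using z a by auto
        moreover have "\<alpha> a z0 = z0" using z0(3) aA by auto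
        ultimately show ?thesis using \<alpha>mult[OF aA c0] by simp
      qed
    qed
    moreover have "list_all2 (\<lambda>y S. y \<in> S) (map z [2..<q+2]) (map (\<lambda>i. fixed_points \<alpha> (As i) M) [2..<q+2])"
      by (rule list_all2_map_same) (use z in \<open>auto simp: fixed_points_def\<close>)
    ultimately show ?thesis unfolding ws_def upt by simp
  qed
  ultimately show ?thesis using xw n'N by blast
qed

end


lemma (in group) cancel1: "x \<in> carrier G \<Longrightarrow> y \<in> carrier G \<Longrightarrow> x \<otimes> (inv x \<otimes> y) = y"
  by (simp add: m_assoc[symmetric])
lemma (in group) cancel2: "x \<in> carrier G \<Longrightarrow> y \<in> carrier G \<Longrightarrow> inv x \<otimes> (x \<otimes> y) = y"
  by (simp add: m_assoc[symmetric])

lemma (in group) rearr: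
  assumes Xg: "subgroup Xg G" and K: "subgroup K G" and L: "subgroup L G" and LX: "L \<subseteq> Xg"
    and Kn: "\<forall>x\<in>Xg. \<forall>k\<in>K. x \<otimes> k \<otimes> inv x \<in> K"
    and LXc: "\<forall>l\<in>L. \<forall>x\<in>Xg. l \<otimes> x \<otimes> inv l \<otimes> inv x \<in> K"
  shows "length cl = length dl \<Longrightarrow> set cl \<subseteq> Xg \<Longrightarrow> set dl \<subseteq> L \<Longrightarrow>
    \<exists>k\<in>K. lprod G cl \<otimes> lprod G dl = lprod G (map2 (\<otimes>) cl dl) \<otimes> k"
proof (induct cl arbitrary: dl)
  case Nil
  have "\<one> \<in> K" using subgroup.one_closed[OF K] .
  moreover have "lprod G [] \<otimes> lprod G [] = lprod G (map2 (\<otimes>) [] []) \<otimes> \<one>" by simp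
  ultimately show ?case using Nil by (intro bexI[of _ "\<one>"]) auto
next
  case (Cons c cl)
  then obtain d dl' where dl: "dl = d # dl'" by (cases dl) auto
  have len: "length cl = length dl'" using Cons.prems dl by simp
  have cX: "c \<in> Xg" "set cl \<subseteq> Xg" using Cons.prems by auto
  have dL: "d \<in> L" "set dl' \<subseteq> L" using Cons.prems dl by auto
  obtain k3 where k3: "k3 \<in> K" "lprod G cl \<otimes> lprod G dl' = lprod G (map2 (\<otimes>) cl dl') \<otimes> k3"
    using Cons.hyps[OF len cX(2) dL(2)] by blast
  have Xgs: "Xg \<subseteq> carrier G" using Xg subgroup.subset by blast
  have Ks: "K \<subseteq> carrier G" using K subgroup.subset by blast
  define Pc where "Pc = lprod G cl"
  define Pd where "Pd = lprod G dl'"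
  have PcX: "Pc \<in> Xg" unfolding Pc_def using lprod_sub[OF Xg cX(2)] .
  have PdX: "Pd \<in> Xg" unfolding Pd_def using lprod_sub[OF Xg] dL(2) LX by auto
  have dX: "d \<in> Xg" using dL LX by auto
  have cc: "c \<in> carrier G" "d \<in> carrier G" "Pc \<in> carrier G" "Pd \<in> carrier G"
    using cX(1) dX PcX PdX Xgs by auto
  have idL: "inv d \<in> Xg" using subgroup.m_inv_closed[OF Xg dX] .
  have idL: "inv d \<in> L" using subgroup.m_inv_closed[OF L dL(1)] .
  have t: "inv d \<otimes> Pc \<otimes> inv (inv d) \<otimes> inv Pc \<in> K" using LXc idL PcX by blast
  have iPc: "inv Pc \<in> Xg" using subgroup.m_inv_closed[OF Xg PcX] .
  have "inv Pc \<otimes> (inv d \<otimes> Pc \<otimes> inv (inv d) \<otimes> inv Pc) \<otimes> inv (inv Pc) \<in> K"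
    using Kn iPc t by blast
  moreover have "inv Pc \<otimes> (inv d \<otimes> Pc \<otimes> inv (inv d) \<otimes> inv Pc) \<otimes> inv (inv Pc) = inv Pc \<otimes> inv d \<otimes> Pc \<otimes> d"
    using cc by (simp add: m_assoc)
  ultimately have k1: "inv Pc \<otimes> inv d \<otimes> Pc \<otimes> d \<in> K" by simp
  have iPd: "inv Pd \<in> Xg" using subgroup.m_inv_closed[OF Xg PdX] .
  have "inv Pd \<otimes> (inv Pc \<otimes> inv d \<otimes> Pc \<otimes> d) \<otimes> inv (inv Pd) \<in> K"
    using Kn iPd k1 by blast
  hence k2: "inv Pd \<otimes> (inv Pc \<otimes> inv d \<otimes> Pc \<otimes> d) \<otimes> Pd \<in> K" using cc by simp
  define k2 where "k2 = inv Pd \<otimes> (inv Pc \<otimes> inv d \<otimes> Pc \<otimes> d) \<otimes> Pd"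
  have eq: "c \<otimes> Pc \<otimes> (d \<otimes> Pd) = (c \<otimes> d) \<otimes> (Pc \<otimes> Pd) \<otimes> k2"
    unfolding k2_def using cc by (simp add: m_assoc cancel1)
  have k3c: "k3 \<in> carrier G" using k3 Ks by auto
  have zc: "lprod G (map2 (\<otimes>) cl dl') \<in> carrier G"
  proof -
    have "set (map2 (\<otimes>) cl dl') \<subseteq> Xg"
    proof
      fix w assume "w \<in> set (map2 (\<otimes>) cl dl')"
      then obtain u v where uv: "(u, v) \<in> set (zip cl dl')" "w = u \<otimes> v" by auto
      have "u \<in> Xg" using set_zip_leftD[OF uv(1)] cX(2) by auto
      moreover have "v \<in> Xg" using set_zip_rightD[OF uv(1)] dL(2) LX by auto
      ultimately show "w \<in> Xg" using uv(2) subgroup.m_closed[OF Xg] by simp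
    qed
    thus ?thesis using lprod_sub[OF Xg] Xgs by auto
  qed
  have "lprod G (c # cl) \<otimes> lprod G dl = (c \<otimes> d) \<otimes> (lprod G (map2 (\<otimes>) cl dl') \<otimes> k3) \<otimes> k2"
    using eq k3(2) unfolding dl Pc_def Pd_def by simp
  also have "\<dots> = lprod G (map2 (\<otimes>) (c # cl) dl) \<otimes> (k3 \<otimes> k2)"
    unfolding dl using cc zc k3c k2 Ks k2_def by (simp add: m_assoc)
  finally show ?case using subgroup.m_closed[OF K k3(1)] k2 unfolding k2_def by blast
qed


context cs begin

lemma fp_subgroup:
  assumes F: "F \<subseteq> carrier A" and H: "subgroup H G"
  shows "subgroup (fixed_points \<alpha> F H) G"
proof -
  have Hs: "H \<subseteq> carrier G" using H subgroup.subset by blast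
  show ?thesis
  proof (rule Gg.subgroupI)
    show "fixed_points \<alpha> F H \<subseteq> carrier G" unfolding fixed_points_def using Hs by auto
    have "\<one>\<^bsub>G\<^esub> \<in> fixed_points \<alpha> F H"
      unfolding fixed_points_def using subgroup.one_closed[OF H] \<alpha>one F by auto
    thus "fixed_points \<alpha> F H \<noteq> {}" by blast
  next
    fix a assume a: "a \<in> fixed_points \<alpha> F H"
    have ac: "a \<in> carrier G" using a Hs unfolding fixed_points_def by auto
    show "inv\<^bsub>G\<^esub> a \<in> fixed_points \<alpha> F H"
      unfolding fixed_points_def using a subgroup.m_inv_closed[OF H] \<alpha>inv[OF _ ac] F
      unfolding fixed_points_def by auto
  next
    fix a b assume a: "a \<in> fixed_points \<alpha> F H" and b: "b \<in> fixed_points \<alpha> F H"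
    have ac: "a \<in> carrier G" "b \<in> carrier G" using a b Hs unfolding fixed_points_def by auto
    show "a \<otimes>\<^bsub>G\<^esub> b \<in> fixed_points \<alpha> F H"
      unfolding fixed_points_def using a b subgroup.m_closed[OF H] \<alpha>mult[OF _ ac] F
      unfolding fixed_points_def by auto
  qed
qed

lemma fp_inv:
  assumes H: "subgroup H G" and Hi: "\<forall>a\<in>carrier A. \<alpha> a ` H \<subseteq> H"
  shows "\<forall>a\<in>carrier A. \<alpha> a ` fixed_points \<alpha> B H \<subseteq> fixed_points \<alpha> B H"
proof (intro ballI subsetI)
  fix a y assume a: "a \<in> carrier A" and "y \<in> \<alpha> a ` fixed_points \<alpha> B H"
  then obtain x where x: "x \<in> fixed_points \<alpha> B H" "y = \<alpha> a x" by blast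
  have Hs: "H \<subseteq> carrier G" using H subgroup.subset by blast
  have xH: "x \<in> H" and xf: "\<forall>b\<in>B. \<alpha> b x = x" using x unfolding fixed_points_def by auto
  have xc: "x \<in> carrier G" using xH Hs by auto
  have "\<alpha> b y = y" if b: "b \<in> B" for b
  proof -
    have bA: "b \<in> carrier A" using b B subgroup.subset by blast
    have "b \<otimes>\<^bsub>A\<^esub> a = a \<otimes>\<^bsub>A\<^esub> b" using BZ b a unfolding group_center_def by blast
    hence "\<alpha> b (\<alpha> a x) = \<alpha> a (\<alpha> b x)" using \<alpha>comp[OF bA a xc] \<alpha>comp[OF a bA xc] by simp
    thus ?thesis using xf b x(2) by simp
  qed
  moreover have "y \<in> H" using Hi a xH x(2) by blast
  ultimately show "y \<in> fixed_points \<alpha> B H" unfolding fixed_points_def by blast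
qed

end


lemma list_all2_map2_mult:
  assumes "list_all2 (\<lambda>y S. y \<in> S) cl (map C js)" "list_all2 (\<lambda>y S. y \<in> S) wl (map D js)"
    and "\<forall>j\<in>set js. subgroup (C j) G \<and> D j \<subseteq> C j"
  shows "list_all2 (\<lambda>y S. y \<in> S) (map2 (\<otimes>\<^bsub>G\<^esub>) cl wl) (map C js)"
  using assms
proof (induct js arbitrary: cl wl)
  case Nil
  then show ?case by simp
next
  case (Cons j js)
  obtain c cl' where c: "cl = c # cl'" "c \<in> C j" "list_all2 (\<lambda>y S. y \<in> S) cl' (map C js)"
    using Cons.prems(1) by (cases cl) auto
  obtain w wl' where w: "wl = w # wl'" "w \<in> D j" "list_all2 (\<lambda>y S. y \<in> S) wl' (map D js)"
    using Cons.prems(2) by (cases wl) auto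
  have "c \<otimes>\<^bsub>G\<^esub> w \<in> C j" using Cons.prems(3) c(2) w(2) subgroup.m_closed by fastforce
  moreover have "list_all2 (\<lambda>y S. y \<in> S) (map2 (\<otimes>\<^bsub>G\<^esub>) cl' wl') (map C js)"
    using Cons.hyps[OF c(3) w(3)] Cons.prems(3) by simp
  ultimately show ?case using c(1) w(1) by simp
qed

context cs begin

lemma step:
  assumes Xg: "subgroup Xg G" and Xi: "\<forall>a\<in>carrier A. \<alpha> a ` Xg \<subseteq> Xg"
    and K: "subgroup K G" and L: "subgroup L G" and KL: "K \<subseteq> L" and LX: "L \<subseteq> Xg"
    and Kn: "\<forall>x\<in>Xg. \<forall>k\<in>K. x \<otimes>\<^bsub>G\<^esub> k \<otimes>\<^bsub>G\<^esub> inv\<^bsub>G\<^esub> x \<in> K"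
    and LXc: "\<forall>l\<in>L. \<forall>x\<in>Xg. l \<otimes>\<^bsub>G\<^esub> x \<otimes>\<^bsub>G\<^esub> inv\<^bsub>G\<^esub> l \<otimes>\<^bsub>G\<^esub> inv\<^bsub>G\<^esub> x \<in> K"
    and Ki: "\<forall>a\<in>carrier A. \<alpha> a ` K \<subseteq> K" and Li: "\<forall>a\<in>carrier A. \<alpha> a ` L \<subseteq> L"
    and hyp: "\<forall>y\<in>fixed_points \<alpha> B Xg. \<exists>cl. list_all2 (\<lambda>y S. y \<in> S) cl (map (\<lambda>i. fixed_points \<alpha> (As i) Xg) [1..<q+2])
                 \<and> (\<exists>m\<in>fixed_points \<alpha> B Xg \<inter> L. y = lprod G cl \<otimes>\<^bsub>G\<^esub> m)"
  shows "\<forall>y\<in>fixed_points \<alpha> B Xg. \<exists>cl. list_all2 (\<lambda>y S. y \<in> S) cl (map (\<lambda>i. fixed_points \<alpha> (As i) Xg) [1..<q+2])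
                 \<and> (\<exists>m\<in>fixed_points \<alpha> B Xg \<inter> K. y = lprod G cl \<otimes>\<^bsub>G\<^esub> m)"
proof
  fix y assume yQ: "y \<in> fixed_points \<alpha> B Xg"
  define Q where "Q = fixed_points \<alpha> B Xg"
  define C where "C i = fixed_points \<alpha> (As i) Xg" for i
  have BA: "B \<subseteq> carrier A" using B subgroup.subset by blast
  have Q: "subgroup Q G" unfolding Q_def using fp_subgroup[OF BA Xg] .
  have Qi: "\<forall>a\<in>carrier A. \<alpha> a ` Q \<subseteq> Q" unfolding Q_def using fp_inv[OF Xg Xi] .
  have QX: "Q \<subseteq> Xg" unfolding Q_def fixed_points_def by auto
  have Xgs: "Xg \<subseteq> carrier G" using Xg subgroup.subset by blast
  define M where "M = Q \<inter> L"
  define N where "N = Q \<inter> K"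
  have M: "subgroup M G" unfolding M_def using Gg.subgroups_Inter_pair[OF Q L] .
  have N: "subgroup N G" unfolding N_def using Gg.subgroups_Inter_pair[OF Q K] .
  have NM: "N \<subseteq> M" unfolding N_def M_def using KL by auto
  have Nn: "\<forall>m\<in>M. \<forall>n\<in>N. m \<otimes>\<^bsub>G\<^esub> n \<otimes>\<^bsub>G\<^esub> inv\<^bsub>G\<^esub> m \<in> N"
  proof (intro ballI)
    fix m n assume m: "m \<in> M" and n: "n \<in> N"
    have "m \<otimes>\<^bsub>G\<^esub> n \<otimes>\<^bsub>G\<^esub> inv\<^bsub>G\<^esub> m \<in> K" using Kn m n LX unfolding M_def N_def by blast
    moreover have "m \<otimes>\<^bsub>G\<^esub> n \<otimes>\<^bsub>G\<^esub> inv\<^bsub>G\<^esub> m \<in> Q"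
      using m n subgroup.m_closed[OF Q] subgroup.m_inv_closed[OF Q] unfolding M_def N_def by auto
    ultimately show "m \<otimes>\<^bsub>G\<^esub> n \<otimes>\<^bsub>G\<^esub> inv\<^bsub>G\<^esub> m \<in> N" unfolding N_def by blast
  qed
  have Mc: "\<forall>x\<in>M. \<forall>y\<in>M. x \<otimes>\<^bsub>G\<^esub> y \<otimes>\<^bsub>G\<^esub> inv\<^bsub>G\<^esub> x \<otimes>\<^bsub>G\<^esub> inv\<^bsub>G\<^esub> y \<in> N"
  proof (intro ballI)
    fix x y assume x: "x \<in> M" and y: "y \<in> M"
    have "x \<otimes>\<^bsub>G\<^esub> y \<otimes>\<^bsub>G\<^esub> inv\<^bsub>G\<^esub> x \<otimes>\<^bsub>G\<^esub> inv\<^bsub>G\<^esub> y \<in> K" using LXc x y LX unfolding M_def by blast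
    moreover have "x \<otimes>\<^bsub>G\<^esub> y \<otimes>\<^bsub>G\<^esub> inv\<^bsub>G\<^esub> x \<otimes>\<^bsub>G\<^esub> inv\<^bsub>G\<^esub> y \<in> Q"
      using x y subgroup.m_closed[OF Q] subgroup.m_inv_closed[OF Q] unfolding M_def by auto
    ultimately show "x \<otimes>\<^bsub>G\<^esub> y \<otimes>\<^bsub>G\<^esub> inv\<^bsub>G\<^esub> x \<otimes>\<^bsub>G\<^esub> inv\<^bsub>G\<^esub> y \<in> N" unfolding N_def by blast
  qed
  have Mi: "\<forall>a\<in>carrier A. \<alpha> a ` M \<subseteq> M" unfolding M_def using Qi Li by blast
  have Ni: "\<forall>a\<in>carrier A. \<alpha> a ` N \<subseteq> N" unfolding N_def using Qi Ki by blast
  have Bt: "\<forall>b\<in>B. \<forall>x\<in>M. \<alpha> b x = x" unfolding M_def Q_def fixed_points_def by auto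
  obtain cl m where cl: "list_all2 (\<lambda>y S. y \<in> S) cl (map C [1..<q+2])" and m: "m \<in> M" "y = lprod G cl \<otimes>\<^bsub>G\<^esub> m"
    using hyp yQ unfolding C_def M_def Q_def by blast
  obtain wl n where wl: "list_all2 (\<lambda>y S. y \<in> S) wl (map (\<lambda>i. fixed_points \<alpha> (As i) M) [1..<q+2])"
      and n: "n \<in> N" "m = lprod G wl \<otimes>\<^bsub>G\<^esub> n"
    using quotient_step[OF M N NM Nn Mc Mi Ni Bt m(1)] by blast
  have CX: "\<forall>S\<in>set (map C [1..<q+2]). S \<subseteq> Xg" unfolding C_def fixed_points_def by auto
  have clX: "set cl \<subseteq> Xg" using list_all2_sub_set[OF cl CX] .
  have DL: "\<forall>S\<in>set (map (\<lambda>i. fixed_points \<alpha> (As i) M) [1..<q+2]). S \<subseteq> L"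
    unfolding M_def fixed_points_def by auto
  have wlL: "set wl \<subseteq> L" using list_all2_sub_set[OF wl DL] .
  have len: "length cl = length wl" using list_all2_lengthD[OF cl] list_all2_lengthD[OF wl] by simp
  obtain k where k: "k \<in> K" "lprod G cl \<otimes>\<^bsub>G\<^esub> lprod G wl = lprod G (map2 (\<otimes>\<^bsub>G\<^esub>) cl wl) \<otimes>\<^bsub>G\<^esub> k"
    using Gg.rearr[OF Xg K L LX Kn LXc len clX wlL] by blast
  define es where "es = map2 (\<otimes>\<^bsub>G\<^esub>) cl wl"
  have Csub: "\<forall>j\<in>set [1..<q+2]. subgroup (C j) G \<and> fixed_points \<alpha> (As j) M \<subseteq> C j"
  proof
    fix j assume j: "j \<in> set [1..<q+2]"
    have j1: "j \<in> {1..q+1}" using j by auto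
    have "As j \<subseteq> carrier A" using AsP[OF j1] subgroup.subset by blast
    hence "subgroup (C j) G" unfolding C_def using fp_subgroup[OF _ Xg] by blast
    moreover have "fixed_points \<alpha> (As j) M \<subseteq> C j" unfolding C_def M_def Q_def fixed_points_def by auto
    ultimately show "subgroup (C j) G \<and> fixed_points \<alpha> (As j) M \<subseteq> C j" by blast
  qed
  have es: "list_all2 (\<lambda>y S. y \<in> S) es (map C [1..<q+2])"
    unfolding es_def using list_all2_map2_mult[OF cl wl Csub] .
  have CQ: "\<forall>S\<in>set (map C [1..<q+2]). S \<subseteq> Q"
  proof
    fix S assume "S \<in> set (map C [1..<q+2])"
    then obtain j where j0: "j \<in> set [1..<q+2]" "S = C j" by auto
    have j: "j \<in> {1..q+1}" "S = C j" using j0 by auto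
    have "B \<subseteq> As j" using AsP[OF j(1)] by auto
    thus "S \<subseteq> Q" unfolding j(2) C_def Q_def fixed_points_def by auto
  qed
  have esQ: "lprod G es \<in> Q" using lprod_sub[OF Q list_all2_sub_set[OF es CQ]] .
  have Ks: "K \<subseteq> carrier G" using K subgroup.subset by blast
  have cc: "lprod G cl \<in> carrier G" "lprod G wl \<in> carrier G" "n \<in> carrier G" "k \<in> carrier G" "lprod G es \<in> carrier G"
    using lprod_sub[OF Xg clX] lprod_sub[OF Xg] wlL LX Xgs n Ks k esQ QX
    by (auto simp: N_def)
  have ye: "y = lprod G es \<otimes>\<^bsub>G\<^esub> (k \<otimes>\<^bsub>G\<^esub> n)"
  proof -
    have "y = (lprod G cl \<otimes>\<^bsub>G\<^esub> lprod G wl) \<otimes>\<^bsub>G\<^esub> n" using m(2) n(2) cc by (simp add: Gg.m_assoc)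
    also have "\<dots> = lprod G es \<otimes>\<^bsub>G\<^esub> (k \<otimes>\<^bsub>G\<^esub> n)" using k(2) cc unfolding es_def by (simp add: Gg.m_assoc)
    finally show ?thesis .
  qed
  have knK: "k \<otimes>\<^bsub>G\<^esub> n \<in> K" using subgroup.m_closed[OF K k(1)] n(1) unfolding N_def by auto
  have "k \<otimes>\<^bsub>G\<^esub> n = inv\<^bsub>G\<^esub> (lprod G es) \<otimes>\<^bsub>G\<^esub> y" using ye cc by (simp add: Gg.cancel2)
  hence knQ: "k \<otimes>\<^bsub>G\<^esub> n \<in> Q"
    using subgroup.m_closed[OF Q subgroup.m_inv_closed[OF Q esQ]] yQ unfolding Q_def by simp
  show "\<exists>cl. list_all2 (\<lambda>y S. y \<in> S) cl (map (\<lambda>i. fixed_points \<alpha> (As i) Xg) [1..<q+2])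
                 \<and> (\<exists>m\<in>fixed_points \<alpha> B Xg \<inter> K. y = lprod G cl \<otimes>\<^bsub>G\<^esub> m)"
    using es ye knK knQ unfolding C_def Q_def by blast
qed

end


context cs begin

lemma start:
  assumes Xg: "subgroup Xg G"
  shows "\<forall>y\<in>fixed_points \<alpha> B Xg. \<exists>cl. list_all2 (\<lambda>y S. y \<in> S) cl (map (\<lambda>i. fixed_points \<alpha> (As i) Xg) [1..<q+2])
                 \<and> (\<exists>m\<in>fixed_points \<alpha> B Xg \<inter> Xg. y = lprod G cl \<otimes>\<^bsub>G\<^esub> m)"
proof
  fix y assume y: "y \<in> fixed_points \<alpha> B Xg"
  have yX: "y \<in> Xg" using y unfolding fixed_points_def by auto
  have yc: "y \<in> carrier G" using yX Xg subgroup.subset by blast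
  have "list_all2 (\<lambda>y S. y \<in> S) (map (\<lambda>i. \<one>\<^bsub>G\<^esub>) [1..<q+2]) (map (\<lambda>i. fixed_points \<alpha> (As i) Xg) [1..<q+2])"
  (is "list_all2 _ ?cl _")
  proof (rule list_all2_map_same, rule ballI)
    fix j assume j: "j \<in> set [1..<q+2]"
    have j1: "j \<in> {1..q+1}" using j by auto
    have "As j \<subseteq> carrier A" using AsP[OF j1] subgroup.subset by blast
    thus "\<one>\<^bsub>G\<^esub> \<in> fixed_points \<alpha> (As j) Xg"
      unfolding fixed_points_def using subgroup.one_closed[OF Xg] \<alpha>one by auto
  qed
  moreover have l1: "lprod G (map (\<lambda>i. \<one>\<^bsub>G\<^esub>) js) = \<one>\<^bsub>G\<^esub>" for js :: "nat list"
    by (induct js) auto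
  moreover have "y = lprod G (map (\<lambda>i. \<one>\<^bsub>G\<^esub>) [1..<q+2]) \<otimes>\<^bsub>G\<^esub> y" unfolding l1 using yc by simp
  moreover have "y \<in> fixed_points \<alpha> B Xg \<inter> Xg" using y yX by blast
  ultimately show "\<exists>cl. list_all2 (\<lambda>y S. y \<in> S) cl (map (\<lambda>i. fixed_points \<alpha> (As i) Xg) [1..<q+2])
                 \<and> (\<exists>m\<in>fixed_points \<alpha> B Xg \<inter> Xg. y = lprod G cl \<otimes>\<^bsub>G\<^esub> m)"
    by (intro exI[of _ ?cl] conjI bexI[of _ y])
qed

lemma finish:
  assumes Xg: "subgroup Xg G"
    and hyp: "\<forall>y\<in>fixed_points \<alpha> B Xg. \<exists>cl. list_all2 (\<lambda>y S. y \<in> S) cl (map (\<lambda>i. fixed_points \<alpha> (As i) Xg) [1..<q+2])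
                 \<and> (\<exists>m\<in>fixed_points \<alpha> B Xg \<inter> {\<one>\<^bsub>G\<^esub>}. y = lprod G cl \<otimes>\<^bsub>G\<^esub> m)"
  shows "fixed_points \<alpha> B Xg = set_prod_list G (map (\<lambda>i. fixed_points \<alpha> (As i) Xg) [1..<q+2])"
proof
  have Xgs: "Xg \<subseteq> carrier G" using Xg subgroup.subset by blast
  have CX: "\<forall>S\<in>set (map (\<lambda>i. fixed_points \<alpha> (As i) Xg) [1..<q+2]). S \<subseteq> Xg"
    unfolding fixed_points_def by auto
  show "fixed_points \<alpha> B Xg \<subseteq> set_prod_list G (map (\<lambda>i. fixed_points \<alpha> (As i) Xg) [1..<q+2])"
  proof
    fix y assume y: "y \<in> fixed_points \<alpha> B Xg"
    then obtain cl where cl: "list_all2 (\<lambda>y S. y \<in> S) cl (map (\<lambda>i. fixed_points \<alpha> (As i) Xg) [1..<q+2])"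
        and ye: "y = lprod G cl \<otimes>\<^bsub>G\<^esub> \<one>\<^bsub>G\<^esub>"
      using hyp by blast
    have "lprod G cl \<in> carrier G" using lprod_sub[OF Xg list_all2_sub_set[OF cl CX]] Xgs by auto
    hence "y = lprod G cl" using ye by simp
    thus "y \<in> set_prod_list G (map (\<lambda>i. fixed_points \<alpha> (As i) Xg) [1..<q+2])" using spl_mem[OF cl, of G] by (simp only:)
  qed
  show "set_prod_list G (map (\<lambda>i. fixed_points \<alpha> (As i) Xg) [1..<q+2]) \<subseteq> fixed_points \<alpha> B Xg"
  proof
    fix z assume "z \<in> set_prod_list G (map (\<lambda>i. fixed_points \<alpha> (As i) Xg) [1..<q+2])"
    from spl_memD[OF this] obtain ys where ys: "list_all2 (\<lambda>y S. y \<in> S) ys (map (\<lambda>i. fixed_points \<alpha> (As i) Xg) [1..<q+2])"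
        and z: "z = lprod G ys" by blast
    have BA: "B \<subseteq> carrier A" using B subgroup.subset by blast
    have CQ: "\<forall>S\<in>set (map (\<lambda>i. fixed_points \<alpha> (As i) Xg) [1..<q+2]). S \<subseteq> fixed_points \<alpha> B Xg"
    proof
      fix S assume "S \<in> set (map (\<lambda>i. fixed_points \<alpha> (As i) Xg) [1..<q+2])"
      then obtain j where j0: "j \<in> set [1..<q+2]" "S = fixed_points \<alpha> (As j) Xg" by auto
      have j: "j \<in> {1..q+1}" using j0 by auto
      have "B \<subseteq> As j" using AsP[OF j] by auto
      thus "S \<subseteq> fixed_points \<alpha> B Xg" unfolding j0(2) fixed_points_def by auto
    qed
    show "z \<in> fixed_points \<alpha> B Xg"
      using lprod_sub[OF fp_subgroup[OF BA Xg] list_all2_sub_set[OF ys CQ]] z by simp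
  qed
qed

end


lemma (in group) conj_gh: "h \<in> carrier G \<Longrightarrow> group_hom G G (\<lambda>x. h \<otimes> x \<otimes> inv h)"
  unfolding group_hom_def group_hom_axioms_def hom_def
  by (auto simp: is_group m_assoc cancel2)

lemma (in group) comm_conj:
  assumes "h \<in> carrier G" "k \<in> carrier G" "x \<in> carrier G"
  shows "h \<otimes> (k \<otimes> x \<otimes> inv k \<otimes> inv x) \<otimes> inv h =
    (h \<otimes> k \<otimes> inv h) \<otimes> (h \<otimes> x \<otimes> inv h) \<otimes> inv (h \<otimes> k \<otimes> inv h) \<otimes> inv (h \<otimes> x \<otimes> inv h)"
  using assms by (simp add: m_assoc inv_mult_group cancel2)

context cs begin

lemma comm_step:
  assumes H: "subgroup H G" and Hi: "\<forall>a\<in>carrier A. \<alpha> a ` H \<subseteq> H"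
    and K: "subgroup K G" and KH: "K \<subseteq> H"
    and Kn: "\<forall>h\<in>H. \<forall>k\<in>K. h \<otimes>\<^bsub>G\<^esub> k \<otimes>\<^bsub>G\<^esub> inv\<^bsub>G\<^esub> h \<in> K"
    and Ki: "\<forall>a\<in>carrier A. \<alpha> a ` K \<subseteq> K"
  shows "subgroup (comm_subgroup G K H) G \<and> comm_subgroup G K H \<subseteq> K
    \<and> (\<forall>h\<in>H. \<forall>k\<in>comm_subgroup G K H. h \<otimes>\<^bsub>G\<^esub> k \<otimes>\<^bsub>G\<^esub> inv\<^bsub>G\<^esub> h \<in> comm_subgroup G K H)
    \<and> (\<forall>a\<in>carrier A. \<alpha> a ` comm_subgroup G K H \<subseteq> comm_subgroup G K H)"
proof -
  define S where "S = (\<Union>k\<in>K. \<Union>h\<in>H. {k \<otimes>\<^bsub>G\<^esub> h \<otimes>\<^bsub>G\<^esub> inv\<^bsub>G\<^esub> k \<otimes>\<^bsub>G\<^esub> inv\<^bsub>G\<^esub> h})"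
  have CS: "comm_subgroup G K H = generate G S" unfolding comm_subgroup_def S_def ..
  have Hs: "H \<subseteq> carrier G" using H subgroup.subset by blast
  have Ks: "K \<subseteq> carrier G" using KH Hs by auto
  have Ss: "S \<subseteq> carrier G"
  proof
    fix s assume "s \<in> S"
    then obtain k h where kh: "k \<in> K" "h \<in> H" "s = k \<otimes>\<^bsub>G\<^esub> h \<otimes>\<^bsub>G\<^esub> inv\<^bsub>G\<^esub> k \<otimes>\<^bsub>G\<^esub> inv\<^bsub>G\<^esub> h"
      unfolding S_def by blast
    have c: "k \<in> carrier G" "h \<in> carrier G" using kh Ks Hs by auto
    thus "s \<in> carrier G" using kh(3) by simp
  qed
  have SK: "S \<subseteq> K"
  proof
    fix s assume "s \<in> S"
    then obtain k h where kh: "k \<in> K" "h \<in> H" "s = k \<otimes>\<^bsub>G\<^esub> h \<otimes>\<^bsub>G\<^esub> inv\<^bsub>G\<^esub> k \<otimes>\<^bsub>G\<^esub> inv\<^bsub>G\<^esub> h"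
      unfolding S_def by blast
    have c: "k \<in> carrier G" "h \<in> carrier G" using kh Ks Hs by auto
    have "h \<otimes>\<^bsub>G\<^esub> inv\<^bsub>G\<^esub> k \<otimes>\<^bsub>G\<^esub> inv\<^bsub>G\<^esub> h \<in> K"
      using Kn kh subgroup.m_inv_closed[OF K kh(1)] by blast
    hence "k \<otimes>\<^bsub>G\<^esub> (h \<otimes>\<^bsub>G\<^esub> inv\<^bsub>G\<^esub> k \<otimes>\<^bsub>G\<^esub> inv\<^bsub>G\<^esub> h) \<in> K"
      using subgroup.m_closed[OF K kh(1)] by blast
    thus "s \<in> K" using kh(3) c by (simp add: Gg.m_assoc)
  qed
  have sub: "subgroup (generate G S) G" using Gg.generate_is_subgroup[OF Ss] .
  have inK: "generate G S \<subseteq> K" using Gg.generate_subgroup_incl[OF SK K] .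
  have nor: "\<forall>h\<in>H. \<forall>k\<in>generate G S. h \<otimes>\<^bsub>G\<^esub> k \<otimes>\<^bsub>G\<^esub> inv\<^bsub>G\<^esub> h \<in> generate G S"
  proof (intro ballI)
    fix h k assume h: "h \<in> H" and k: "k \<in> generate G S"
    have hc: "h \<in> carrier G" using h Hs by auto
    have "(\<lambda>x. h \<otimes>\<^bsub>G\<^esub> x \<otimes>\<^bsub>G\<^esub> inv\<^bsub>G\<^esub> h) ` S \<subseteq> S"
    proof
      fix t assume "t \<in> (\<lambda>x. h \<otimes>\<^bsub>G\<^esub> x \<otimes>\<^bsub>G\<^esub> inv\<^bsub>G\<^esub> h) ` S"
      then obtain k' x where kx: "k' \<in> K" "x \<in> H"
          "t = h \<otimes>\<^bsub>G\<^esub> (k' \<otimes>\<^bsub>G\<^esub> x \<otimes>\<^bsub>G\<^esub> inv\<^bsub>G\<^esub> k' \<otimes>\<^bsub>G\<^esub> inv\<^bsub>G\<^esub> x) \<otimes>\<^bsub>G\<^esub> inv\<^bsub>G\<^esub> h"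
        unfolding S_def by blast
      have c: "k' \<in> carrier G" "x \<in> carrier G" using kx Ks Hs by auto
      have "h \<otimes>\<^bsub>G\<^esub> k' \<otimes>\<^bsub>G\<^esub> inv\<^bsub>G\<^esub> h \<in> K" using Kn h kx(1) by blast
      moreover have "h \<otimes>\<^bsub>G\<^esub> x \<otimes>\<^bsub>G\<^esub> inv\<^bsub>G\<^esub> h \<in> H"
        using h kx(2) subgroup.m_closed[OF H] subgroup.m_inv_closed[OF H] by blast
      ultimately show "t \<in> S" unfolding kx(3) Gg.comm_conj[OF hc c] S_def by blast
    qed
    hence "generate G ((\<lambda>x. h \<otimes>\<^bsub>G\<^esub> x \<otimes>\<^bsub>G\<^esub> inv\<^bsub>G\<^esub> h) ` S) \<subseteq> generate G S"
      by (rule Gg.mono_generate)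
    moreover have "generate G ((\<lambda>x. h \<otimes>\<^bsub>G\<^esub> x \<otimes>\<^bsub>G\<^esub> inv\<^bsub>G\<^esub> h) ` S) = (\<lambda>x. h \<otimes>\<^bsub>G\<^esub> x \<otimes>\<^bsub>G\<^esub> inv\<^bsub>G\<^esub> h) ` generate G S"
      using group_hom.generate_img[OF Gg.conj_gh[OF hc] Ss] .
    ultimately show "h \<otimes>\<^bsub>G\<^esub> k \<otimes>\<^bsub>G\<^esub> inv\<^bsub>G\<^esub> h \<in> generate G S" using k by blast
  qed
  have inv: "\<forall>a\<in>carrier A. \<alpha> a ` generate G S \<subseteq> generate G S"
  proof
    fix a assume a: "a \<in> carrier A"
    have "\<alpha> a ` S \<subseteq> S"
    proof
      fix t assume "t \<in> \<alpha> a ` S"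
      then obtain k' x where kx: "k' \<in> K" "x \<in> H"
          "t = \<alpha> a (k' \<otimes>\<^bsub>G\<^esub> x \<otimes>\<^bsub>G\<^esub> inv\<^bsub>G\<^esub> k' \<otimes>\<^bsub>G\<^esub> inv\<^bsub>G\<^esub> x)"
        unfolding S_def by blast
      have c: "k' \<in> carrier G" "x \<in> carrier G" using kx Ks Hs by auto
      have "t = \<alpha> a k' \<otimes>\<^bsub>G\<^esub> \<alpha> a x \<otimes>\<^bsub>G\<^esub> inv\<^bsub>G\<^esub> (\<alpha> a k') \<otimes>\<^bsub>G\<^esub> inv\<^bsub>G\<^esub> (\<alpha> a x)"
        using kx(3) c a by (simp add: \<alpha>mult \<alpha>inv \<alpha>c)
      moreover have "\<alpha> a k' \<in> K" using Ki a kx(1) by blast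
      moreover have "\<alpha> a x \<in> H" using Hi a kx(2) by blast
      ultimately show "t \<in> S" unfolding S_def by blast
    qed
    hence "generate G (\<alpha> a ` S) \<subseteq> generate G S" by (rule Gg.mono_generate)
    moreover have "generate G (\<alpha> a ` S) = \<alpha> a ` generate G S"
      using group_hom.generate_img[OF \<alpha>gh[OF a] Ss] .
    ultimately show "\<alpha> a ` generate G S \<subseteq> generate G S" by simp
  qed
  show ?thesis unfolding CS using sub inK nor inv by blast
qed

lemma comm_in:
  assumes "l \<in> K" "x \<in> H"
  shows "l \<otimes>\<^bsub>G\<^esub> x \<otimes>\<^bsub>G\<^esub> inv\<^bsub>G\<^esub> l \<otimes>\<^bsub>G\<^esub> inv\<^bsub>G\<^esub> x \<in> comm_subgroup G K H"
  unfolding comm_subgroup_def using assms by (intro generate.incl) blast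

end


context cs begin

lemma H_case:
  assumes H: "subgroup H G" and Hi: "\<forall>a\<in>carrier A. \<alpha> a ` H \<subseteq> H"
    and nil: "nilpotent_subgroup G H"
  shows "fixed_points \<alpha> B H = set_prod_list G (map (\<lambda>i. fixed_points \<alpha> (As i) H) [1..<q+2])"
proof -
  define L where "L n = lower_central G H n" for n
  have LS: "L (Suc n) = comm_subgroup G (L n) H" for n unfolding L_def by simp
  have facts: "subgroup (L n) G \<and> L n \<subseteq> H
    \<and> (\<forall>h\<in>H. \<forall>k\<in>L n. h \<otimes>\<^bsub>G\<^esub> k \<otimes>\<^bsub>G\<^esub> inv\<^bsub>G\<^esub> h \<in> L n)
    \<and> (\<forall>a\<in>carrier A. \<alpha> a ` L n \<subseteq> L n)" for n
  proof (induct n)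
    case 0
    have "\<forall>h\<in>H. \<forall>k\<in>H. h \<otimes>\<^bsub>G\<^esub> k \<otimes>\<^bsub>G\<^esub> inv\<^bsub>G\<^esub> h \<in> H"
      using subgroup.m_closed[OF H] subgroup.m_inv_closed[OF H] by blast
    then show ?case unfolding L_def using H Hi by simp
  next
    case (Suc n)
    have "subgroup (comm_subgroup G (L n) H) G \<and> comm_subgroup G (L n) H \<subseteq> L n
    \<and> (\<forall>h\<in>H. \<forall>k\<in>comm_subgroup G (L n) H. h \<otimes>\<^bsub>G\<^esub> k \<otimes>\<^bsub>G\<^esub> inv\<^bsub>G\<^esub> h \<in> comm_subgroup G (L n) H)
    \<and> (\<forall>a\<in>carrier A. \<alpha> a ` comm_subgroup G (L n) H \<subseteq> comm_subgroup G (L n) H)"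
      using comm_step[OF H Hi conjunct1[OF Suc] conjunct1[OF conjunct2[OF Suc]]
          conjunct1[OF conjunct2[OF conjunct2[OF Suc]]] conjunct2[OF conjunct2[OF conjunct2[OF Suc]]]] .
    moreover have "L n \<subseteq> H" using Suc by simp
    ultimately show ?case unfolding LS by (intro conjI) (simp_all, blast)
  qed
  have dec: "L (Suc n) \<subseteq> L n" for n
  proof -
    have f: "subgroup (L n) G" "L n \<subseteq> H"
      "\<forall>h\<in>H. \<forall>k\<in>L n. h \<otimes>\<^bsub>G\<^esub> k \<otimes>\<^bsub>G\<^esub> inv\<^bsub>G\<^esub> h \<in> L n"
      "\<forall>a\<in>carrier A. \<alpha> a ` L n \<subseteq> L n" using facts[of n] by simp_all
    show ?thesis unfolding LS using comm_step[OF H Hi f] by simp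
  qed
  have comm: "\<forall>l\<in>L n. \<forall>x\<in>H. l \<otimes>\<^bsub>G\<^esub> x \<otimes>\<^bsub>G\<^esub> inv\<^bsub>G\<^esub> l \<otimes>\<^bsub>G\<^esub> inv\<^bsub>G\<^esub> x \<in> L (Suc n)" for n
    unfolding LS using comm_in by blast
  have P: "\<forall>y\<in>fixed_points \<alpha> B H. \<exists>cl. list_all2 (\<lambda>y S. y \<in> S) cl (map (\<lambda>i. fixed_points \<alpha> (As i) H) [1..<q+2])
                 \<and> (\<exists>m\<in>fixed_points \<alpha> B H \<inter> L n. y = lprod G cl \<otimes>\<^bsub>G\<^esub> m)" for n
  proof (induct n)
    case 0
    then show ?case using start[OF H] unfolding L_def by simp
  next
    case (Suc n)
    have f1: "subgroup (L (Suc n)) G" "L (Suc n) \<subseteq> H"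
      "\<forall>h\<in>H. \<forall>k\<in>L (Suc n). h \<otimes>\<^bsub>G\<^esub> k \<otimes>\<^bsub>G\<^esub> inv\<^bsub>G\<^esub> h \<in> L (Suc n)"
      "\<forall>a\<in>carrier A. \<alpha> a ` L (Suc n) \<subseteq> L (Suc n)" using facts[of "Suc n"] by auto
    have f0: "subgroup (L n) G" "L n \<subseteq> H" "\<forall>a\<in>carrier A. \<alpha> a ` L n \<subseteq> L n"
      using facts[of n] by auto
    show ?case by (rule step[OF H Hi f1(1) f0(1) dec f0(2) f1(3) comm f1(4) f0(3) Suc])
  qed
  obtain n where n: "lower_central G H n = {\<one>\<^bsub>G\<^esub>}" using nil unfolding nilpotent_subgroup_def by blast
  show ?thesis using finish[OF H] P[of n] n unfolding L_def by simp
qed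

end


context cs begin

lemma np_sub:
  assumes P: "subgroup P G" and N: "subgroup N G" and NP: "N \<subseteq> P"
    and Nn: "\<forall>h\<in>P. \<forall>k\<in>N. h \<otimes>\<^bsub>G\<^esub> k \<otimes>\<^bsub>G\<^esub> inv\<^bsub>G\<^esub> h \<in> N"
  shows "subgroup {x\<in>P. \<forall>y\<in>P. x \<otimes>\<^bsub>G\<^esub> y \<otimes>\<^bsub>G\<^esub> inv\<^bsub>G\<^esub> x \<otimes>\<^bsub>G\<^esub> inv\<^bsub>G\<^esub> y \<in> N} G"
proof (rule Gg.subgroupI)
  have Ps: "P \<subseteq> carrier G" using P subgroup.subset by blast
  show "{x\<in>P. \<forall>y\<in>P. x \<otimes>\<^bsub>G\<^esub> y \<otimes>\<^bsub>G\<^esub> inv\<^bsub>G\<^esub> x \<otimes>\<^bsub>G\<^esub> inv\<^bsub>G\<^esub> y \<in> N} \<subseteq> carrier G" using Ps by auto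
  have "\<one>\<^bsub>G\<^esub> \<in> {x\<in>P. \<forall>y\<in>P. x \<otimes>\<^bsub>G\<^esub> y \<otimes>\<^bsub>G\<^esub> inv\<^bsub>G\<^esub> x \<otimes>\<^bsub>G\<^esub> inv\<^bsub>G\<^esub> y \<in> N}"
    using subgroup.one_closed[OF P] subgroup.one_closed[OF N] Ps by auto
  thus "{x\<in>P. \<forall>y\<in>P. x \<otimes>\<^bsub>G\<^esub> y \<otimes>\<^bsub>G\<^esub> inv\<^bsub>G\<^esub> x \<otimes>\<^bsub>G\<^esub> inv\<^bsub>G\<^esub> y \<in> N} \<noteq> {}" by blast
next
  have Ps: "P \<subseteq> carrier G" using P subgroup.subset by blast
  fix x assume x: "x \<in> {x\<in>P. \<forall>y\<in>P. x \<otimes>\<^bsub>G\<^esub> y \<otimes>\<^bsub>G\<^esub> inv\<^bsub>G\<^esub> x \<otimes>\<^bsub>G\<^esub> inv\<^bsub>G\<^esub> y \<in> N}"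
  have xP: "x \<in> P" and xc: "\<forall>y\<in>P. x \<otimes>\<^bsub>G\<^esub> y \<otimes>\<^bsub>G\<^esub> inv\<^bsub>G\<^esub> x \<otimes>\<^bsub>G\<^esub> inv\<^bsub>G\<^esub> y \<in> N" using x by auto
  have ixP: "inv\<^bsub>G\<^esub> x \<in> P" using subgroup.m_inv_closed[OF P xP] .
  have "\<forall>y\<in>P. inv\<^bsub>G\<^esub> x \<otimes>\<^bsub>G\<^esub> y \<otimes>\<^bsub>G\<^esub> inv\<^bsub>G\<^esub> (inv\<^bsub>G\<^esub> x) \<otimes>\<^bsub>G\<^esub> inv\<^bsub>G\<^esub> y \<in> N"
  proof
    fix y assume yP: "y \<in> P"
    have c: "x \<in> carrier G" "y \<in> carrier G" using xP yP Ps by auto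
    define c0 where "c0 = x \<otimes>\<^bsub>G\<^esub> y \<otimes>\<^bsub>G\<^esub> inv\<^bsub>G\<^esub> x \<otimes>\<^bsub>G\<^esub> inv\<^bsub>G\<^esub> y"
    have c0N: "c0 \<in> N" unfolding c0_def using xc yP by blast
    have "inv\<^bsub>G\<^esub> x \<otimes>\<^bsub>G\<^esub> inv\<^bsub>G\<^esub> c0 \<otimes>\<^bsub>G\<^esub> inv\<^bsub>G\<^esub> (inv\<^bsub>G\<^esub> x) \<in> N"
      using Nn ixP subgroup.m_inv_closed[OF N c0N] by blast
    moreover have "inv\<^bsub>G\<^esub> x \<otimes>\<^bsub>G\<^esub> inv\<^bsub>G\<^esub> c0 \<otimes>\<^bsub>G\<^esub> inv\<^bsub>G\<^esub> (inv\<^bsub>G\<^esub> x) =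
        inv\<^bsub>G\<^esub> x \<otimes>\<^bsub>G\<^esub> y \<otimes>\<^bsub>G\<^esub> inv\<^bsub>G\<^esub> (inv\<^bsub>G\<^esub> x) \<otimes>\<^bsub>G\<^esub> inv\<^bsub>G\<^esub> y"
      unfolding c0_def using c by (simp add: Gg.m_assoc Gg.inv_mult_group Gg.cancel1 Gg.cancel2)
    ultimately show "inv\<^bsub>G\<^esub> x \<otimes>\<^bsub>G\<^esub> y \<otimes>\<^bsub>G\<^esub> inv\<^bsub>G\<^esub> (inv\<^bsub>G\<^esub> x) \<otimes>\<^bsub>G\<^esub> inv\<^bsub>G\<^esub> y \<in> N" by simp
  qed
  thus "inv\<^bsub>G\<^esub> x \<in> {x\<in>P. \<forall>y\<in>P. x \<otimes>\<^bsub>G\<^esub> y \<otimes>\<^bsub>G\<^esub> inv\<^bsub>G\<^esub> x \<otimes>\<^bsub>G\<^esub> inv\<^bsub>G\<^esub> y \<in> N}"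
    using ixP by blast
next
  have Ps: "P \<subseteq> carrier G" using P subgroup.subset by blast
  fix x1 x2
  assume x1: "x1 \<in> {x\<in>P. \<forall>y\<in>P. x \<otimes>\<^bsub>G\<^esub> y \<otimes>\<^bsub>G\<^esub> inv\<^bsub>G\<^esub> x \<otimes>\<^bsub>G\<^esub> inv\<^bsub>G\<^esub> y \<in> N}"
     and x2: "x2 \<in> {x\<in>P. \<forall>y\<in>P. x \<otimes>\<^bsub>G\<^esub> y \<otimes>\<^bsub>G\<^esub> inv\<^bsub>G\<^esub> x \<otimes>\<^bsub>G\<^esub> inv\<^bsub>G\<^esub> y \<in> N}"
  have xP: "x1 \<in> P" "x2 \<in> P" using x1 x2 by auto
  have xc1: "\<forall>y\<in>P. x1 \<otimes>\<^bsub>G\<^esub> y \<otimes>\<^bsub>G\<^esub> inv\<^bsub>G\<^esub> x1 \<otimes>\<^bsub>G\<^esub> inv\<^bsub>G\<^esub> y \<in> N" using x1 by auto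
  have xc2: "\<forall>y\<in>P. x2 \<otimes>\<^bsub>G\<^esub> y \<otimes>\<^bsub>G\<^esub> inv\<^bsub>G\<^esub> x2 \<otimes>\<^bsub>G\<^esub> inv\<^bsub>G\<^esub> y \<in> N" using x2 by auto
  have mP: "x1 \<otimes>\<^bsub>G\<^esub> x2 \<in> P" using subgroup.m_closed[OF P xP] .
  have "\<forall>y\<in>P. x1 \<otimes>\<^bsub>G\<^esub> x2 \<otimes>\<^bsub>G\<^esub> y \<otimes>\<^bsub>G\<^esub> inv\<^bsub>G\<^esub> (x1 \<otimes>\<^bsub>G\<^esub> x2) \<otimes>\<^bsub>G\<^esub> inv\<^bsub>G\<^esub> y \<in> N"
  proof
    fix y assume yP: "y \<in> P"
    have c: "x1 \<in> carrier G" "x2 \<in> carrier G" "y \<in> carrier G" using xP yP Ps by auto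
    define c2 where "c2 = x2 \<otimes>\<^bsub>G\<^esub> y \<otimes>\<^bsub>G\<^esub> inv\<^bsub>G\<^esub> x2 \<otimes>\<^bsub>G\<^esub> inv\<^bsub>G\<^esub> y"
    define c1 where "c1 = x1 \<otimes>\<^bsub>G\<^esub> y \<otimes>\<^bsub>G\<^esub> inv\<^bsub>G\<^esub> x1 \<otimes>\<^bsub>G\<^esub> inv\<^bsub>G\<^esub> y"
    have c2N: "c2 \<in> N" unfolding c2_def using xc2 yP by blast
    have c1N: "c1 \<in> N" unfolding c1_def using xc1 yP by blast
    have "x1 \<otimes>\<^bsub>G\<^esub> c2 \<otimes>\<^bsub>G\<^esub> inv\<^bsub>G\<^esub> x1 \<in> N" using Nn xP(1) c2N by blast
    hence "(x1 \<otimes>\<^bsub>G\<^esub> c2 \<otimes>\<^bsub>G\<^esub> inv\<^bsub>G\<^esub> x1) \<otimes>\<^bsub>G\<^esub> c1 \<in> N" using subgroup.m_closed[OF N _ c1N] by blast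
    moreover have "(x1 \<otimes>\<^bsub>G\<^esub> c2 \<otimes>\<^bsub>G\<^esub> inv\<^bsub>G\<^esub> x1) \<otimes>\<^bsub>G\<^esub> c1 =
        x1 \<otimes>\<^bsub>G\<^esub> x2 \<otimes>\<^bsub>G\<^esub> y \<otimes>\<^bsub>G\<^esub> inv\<^bsub>G\<^esub> (x1 \<otimes>\<^bsub>G\<^esub> x2) \<otimes>\<^bsub>G\<^esub> inv\<^bsub>G\<^esub> y"
      unfolding c1_def c2_def using c by (simp add: Gg.m_assoc Gg.inv_mult_group Gg.cancel1 Gg.cancel2)
    ultimately show "x1 \<otimes>\<^bsub>G\<^esub> x2 \<otimes>\<^bsub>G\<^esub> y \<otimes>\<^bsub>G\<^esub> inv\<^bsub>G\<^esub> (x1 \<otimes>\<^bsub>G\<^esub> x2) \<otimes>\<^bsub>G\<^esub> inv\<^bsub>G\<^esub> y \<in> N" by simp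
  qed
  thus "x1 \<otimes>\<^bsub>G\<^esub> x2 \<in> {x\<in>P. \<forall>y\<in>P. x \<otimes>\<^bsub>G\<^esub> y \<otimes>\<^bsub>G\<^esub> inv\<^bsub>G\<^esub> x \<otimes>\<^bsub>G\<^esub> inv\<^bsub>G\<^esub> y \<in> N}"
    using mP by blast
qed

end


context cs begin

lemma np_facts:
  assumes P: "subgroup P G" and Pi: "\<forall>a\<in>carrier A. \<alpha> a ` P \<subseteq> P"
    and N: "subgroup N G" and NP: "N \<subseteq> P"
    and Nn: "\<forall>h\<in>P. \<forall>k\<in>N. h \<otimes>\<^bsub>G\<^esub> k \<otimes>\<^bsub>G\<^esub> inv\<^bsub>G\<^esub> h \<in> N"
    and Ni: "\<forall>a\<in>carrier A. \<alpha> a ` N \<subseteq> N"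
  defines "Np \<equiv> {x\<in>P. \<forall>y\<in>P. x \<otimes>\<^bsub>G\<^esub> y \<otimes>\<^bsub>G\<^esub> inv\<^bsub>G\<^esub> x \<otimes>\<^bsub>G\<^esub> inv\<^bsub>G\<^esub> y \<in> N}"
  shows "N \<subseteq> Np" "Np \<subseteq> P" "\<forall>h\<in>P. \<forall>k\<in>Np. h \<otimes>\<^bsub>G\<^esub> k \<otimes>\<^bsub>G\<^esub> inv\<^bsub>G\<^esub> h \<in> Np"
    "\<forall>a\<in>carrier A. \<alpha> a ` Np \<subseteq> Np"
proof -
  have Ps: "P \<subseteq> carrier G" using P subgroup.subset by blast
  show "Np \<subseteq> P" unfolding Np_def by auto
  show "N \<subseteq> Np"
  proof
    fix n assume n: "n \<in> N"
    have nP: "n \<in> P" using n NP by auto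
    have "\<forall>y\<in>P. n \<otimes>\<^bsub>G\<^esub> y \<otimes>\<^bsub>G\<^esub> inv\<^bsub>G\<^esub> n \<otimes>\<^bsub>G\<^esub> inv\<^bsub>G\<^esub> y \<in> N"
    proof
      fix y assume yP: "y \<in> P"
      have c: "n \<in> carrier G" "y \<in> carrier G" using nP yP Ps by auto
      have "y \<otimes>\<^bsub>G\<^esub> inv\<^bsub>G\<^esub> n \<otimes>\<^bsub>G\<^esub> inv\<^bsub>G\<^esub> y \<in> N"
        using Nn yP subgroup.m_inv_closed[OF N n] by blast
      hence "n \<otimes>\<^bsub>G\<^esub> (y \<otimes>\<^bsub>G\<^esub> inv\<^bsub>G\<^esub> n \<otimes>\<^bsub>G\<^esub> inv\<^bsub>G\<^esub> y) \<in> N" using subgroup.m_closed[OF N n] by blast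
      thus "n \<otimes>\<^bsub>G\<^esub> y \<otimes>\<^bsub>G\<^esub> inv\<^bsub>G\<^esub> n \<otimes>\<^bsub>G\<^esub> inv\<^bsub>G\<^esub> y \<in> N" using c by (simp add: Gg.m_assoc)
    qed
    thus "n \<in> Np" unfolding Np_def using nP by blast
  qed
  show "\<forall>h\<in>P. \<forall>k\<in>Np. h \<otimes>\<^bsub>G\<^esub> k \<otimes>\<^bsub>G\<^esub> inv\<^bsub>G\<^esub> h \<in> Np"
  proof (intro ballI)
    fix h x assume hP: "h \<in> P" and x: "x \<in> Np"
    have xP: "x \<in> P" and xc: "\<forall>y\<in>P. x \<otimes>\<^bsub>G\<^esub> y \<otimes>\<^bsub>G\<^esub> inv\<^bsub>G\<^esub> x \<otimes>\<^bsub>G\<^esub> inv\<^bsub>G\<^esub> y \<in> N"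
      using x unfolding Np_def by auto
    have ihP: "inv\<^bsub>G\<^esub> h \<in> P" using subgroup.m_inv_closed[OF P hP] .
    have cP: "h \<otimes>\<^bsub>G\<^esub> x \<otimes>\<^bsub>G\<^esub> inv\<^bsub>G\<^esub> h \<in> P"
      using subgroup.m_closed[OF P subgroup.m_closed[OF P hP xP] ihP] .
    have "\<forall>y\<in>P. (h \<otimes>\<^bsub>G\<^esub> x \<otimes>\<^bsub>G\<^esub> inv\<^bsub>G\<^esub> h) \<otimes>\<^bsub>G\<^esub> y \<otimes>\<^bsub>G\<^esub> inv\<^bsub>G\<^esub> (h \<otimes>\<^bsub>G\<^esub> x \<otimes>\<^bsub>G\<^esub> inv\<^bsub>G\<^esub> h) \<otimes>\<^bsub>G\<^esub> inv\<^bsub>G\<^esub> y \<in> N"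
    proof
      fix y assume yP: "y \<in> P"
      have c: "h \<in> carrier G" "x \<in> carrier G" "y \<in> carrier G" using hP xP yP Ps by auto
      define y' where "y' = inv\<^bsub>G\<^esub> h \<otimes>\<^bsub>G\<^esub> y \<otimes>\<^bsub>G\<^esub> h"
      have y'P: "y' \<in> P" unfolding y'_def using subgroup.m_closed[OF P subgroup.m_closed[OF P ihP yP] hP] .
      have "x \<otimes>\<^bsub>G\<^esub> y' \<otimes>\<^bsub>G\<^esub> inv\<^bsub>G\<^esub> x \<otimes>\<^bsub>G\<^esub> inv\<^bsub>G\<^esub> y' \<in> N" using xc y'P by blast
      hence "h \<otimes>\<^bsub>G\<^esub> (x \<otimes>\<^bsub>G\<^esub> y' \<otimes>\<^bsub>G\<^esub> inv\<^bsub>G\<^esub> x \<otimes>\<^bsub>G\<^esub> inv\<^bsub>G\<^esub> y') \<otimes>\<^bsub>G\<^esub> inv\<^bsub>G\<^esub> h \<in> N" using Nn hP by blast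
      moreover have "h \<otimes>\<^bsub>G\<^esub> (x \<otimes>\<^bsub>G\<^esub> y' \<otimes>\<^bsub>G\<^esub> inv\<^bsub>G\<^esub> x \<otimes>\<^bsub>G\<^esub> inv\<^bsub>G\<^esub> y') \<otimes>\<^bsub>G\<^esub> inv\<^bsub>G\<^esub> h =
         (h \<otimes>\<^bsub>G\<^esub> x \<otimes>\<^bsub>G\<^esub> inv\<^bsub>G\<^esub> h) \<otimes>\<^bsub>G\<^esub> y \<otimes>\<^bsub>G\<^esub> inv\<^bsub>G\<^esub> (h \<otimes>\<^bsub>G\<^esub> x \<otimes>\<^bsub>G\<^esub> inv\<^bsub>G\<^esub> h) \<otimes>\<^bsub>G\<^esub> inv\<^bsub>G\<^esub> y"
        unfolding y'_def using c by (simp add: Gg.m_assoc Gg.inv_mult_group Gg.cancel1 Gg.cancel2)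
      ultimately show "(h \<otimes>\<^bsub>G\<^esub> x \<otimes>\<^bsub>G\<^esub> inv\<^bsub>G\<^esub> h) \<otimes>\<^bsub>G\<^esub> y \<otimes>\<^bsub>G\<^esub> inv\<^bsub>G\<^esub> (h \<otimes>\<^bsub>G\<^esub> x \<otimes>\<^bsub>G\<^esub> inv\<^bsub>G\<^esub> h) \<otimes>\<^bsub>G\<^esub> inv\<^bsub>G\<^esub> y \<in> N"
        by simp
    qed
    thus "h \<otimes>\<^bsub>G\<^esub> x \<otimes>\<^bsub>G\<^esub> inv\<^bsub>G\<^esub> h \<in> Np" unfolding Np_def using cP by blast
  qed
  show "\<forall>a\<in>carrier A. \<alpha> a ` Np \<subseteq> Np"
  proof (intro ballI subsetI)
    fix a t assume a: "a \<in> carrier A" and "t \<in> \<alpha> a ` Np"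
    then obtain x where x: "x \<in> Np" "t = \<alpha> a x" by blast
    have xP: "x \<in> P" and xc: "\<forall>y\<in>P. x \<otimes>\<^bsub>G\<^esub> y \<otimes>\<^bsub>G\<^esub> inv\<^bsub>G\<^esub> x \<otimes>\<^bsub>G\<^esub> inv\<^bsub>G\<^esub> y \<in> N"
      using x unfolding Np_def by auto
    have tP: "t \<in> P" using Pi a xP x(2) by blast
    have "\<forall>y\<in>P. t \<otimes>\<^bsub>G\<^esub> y \<otimes>\<^bsub>G\<^esub> inv\<^bsub>G\<^esub> t \<otimes>\<^bsub>G\<^esub> inv\<^bsub>G\<^esub> y \<in> N"
    proof
      fix y assume yP: "y \<in> P"
      have ia: "inv\<^bsub>A\<^esub> a \<in> carrier A" using a by simp
      define y' where "y' = \<alpha> (inv\<^bsub>A\<^esub> a) y"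
      have y'P: "y' \<in> P" unfolding y'_def using Pi ia yP by blast
      have yc: "y \<in> carrier G" using yP Ps by auto
      have yy: "\<alpha> a y' = y" unfolding y'_def using \<alpha>comp[OF a ia yc, symmetric] \<alpha>id[OF yc] a by simp
      have c: "x \<in> carrier G" "y' \<in> carrier G" using xP y'P Ps by auto
      have "x \<otimes>\<^bsub>G\<^esub> y' \<otimes>\<^bsub>G\<^esub> inv\<^bsub>G\<^esub> x \<otimes>\<^bsub>G\<^esub> inv\<^bsub>G\<^esub> y' \<in> N" using xc y'P by blast
      hence "\<alpha> a (x \<otimes>\<^bsub>G\<^esub> y' \<otimes>\<^bsub>G\<^esub> inv\<^bsub>G\<^esub> x \<otimes>\<^bsub>G\<^esub> inv\<^bsub>G\<^esub> y') \<in> N" using Ni a by blast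
      moreover have "\<alpha> a (x \<otimes>\<^bsub>G\<^esub> y' \<otimes>\<^bsub>G\<^esub> inv\<^bsub>G\<^esub> x \<otimes>\<^bsub>G\<^esub> inv\<^bsub>G\<^esub> y') = t \<otimes>\<^bsub>G\<^esub> y \<otimes>\<^bsub>G\<^esub> inv\<^bsub>G\<^esub> t \<otimes>\<^bsub>G\<^esub> inv\<^bsub>G\<^esub> y"
        using c a x(2) yy by (simp add: \<alpha>mult \<alpha>inv \<alpha>c)
      ultimately show "t \<otimes>\<^bsub>G\<^esub> y \<otimes>\<^bsub>G\<^esub> inv\<^bsub>G\<^esub> t \<otimes>\<^bsub>G\<^esub> inv\<^bsub>G\<^esub> y \<in> N" by simp
    qed
    thus "t \<in> Np" unfolding Np_def using tP by blast
  qed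
qed

end


context cs begin

lemma np_grow:
  assumes P: "subgroup P G" and cP: "card P = p ^ k" and p: "Factorial_Ring.prime p"
    and N: "subgroup N G" and NP: "N \<subseteq> P"
    and Nn: "\<forall>h\<in>P. \<forall>k\<in>N. h \<otimes>\<^bsub>G\<^esub> k \<otimes>\<^bsub>G\<^esub> inv\<^bsub>G\<^esub> h \<in> N"
    and ne: "N \<noteq> P"
  shows "\<exists>x\<in>P. x \<notin> N \<and> (\<forall>y\<in>P. x \<otimes>\<^bsub>G\<^esub> y \<otimes>\<^bsub>G\<^esub> inv\<^bsub>G\<^esub> x \<otimes>\<^bsub>G\<^esub> inv\<^bsub>G\<^esub> y \<in> N)"
proof -
  define GP where "GP = G\<lparr>carrier := P\<rparr>"
  have Ps: "P \<subseteq> carrier G" using P subgroup.subset by blast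
  have finP: "finite P" using Ps finG finite_subset by blast
  have gGP: "group GP" unfolding GP_def using Gg.subgroup_imp_group[OF P] .
  have NGP: "subgroup N GP" unfolding GP_def using Gg.subgroup_incl[OF N P NP] .
  have nGP: "N \<lhd> GP"
  proof -
    have "\<forall>y\<in>carrier GP. \<forall>h\<in>N. y \<otimes>\<^bsub>GP\<^esub> h \<otimes>\<^bsub>GP\<^esub> inv\<^bsub>GP\<^esub> y \<in> N"
      unfolding GP_def using Nn Gg.m_inv_consistent[OF P] by simp
    thus ?thesis using group.normal_inv_iff[OF gGP] NGP by blast
  qed
  interpret nN: normal N GP by (rule nGP)
  define K where "K = GP Mod N"
  have gK: "group K" unfolding K_def by (rule nN.factorgroup_is_group)
  have carK: "carrier K = (\<lambda>m. N #>\<^bsub>G\<^esub> m) ` P"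
    unfolding K_def GP_def carrier_FactGroup by simp
  have finK: "finite (carrier K)" unfolding carK using finP by simp
  have lag: "card (rcosets\<^bsub>GP\<^esub> N) * card N = card P"
    using group.lagrange[OF gGP NGP] unfolding GP_def order_def by simp
  have oK: "order K = card (rcosets\<^bsub>GP\<^esub> N)" unfolding K_def order_def FactGroup_def by simp
  have "order K dvd p ^ k" using lag oK cP by (metis dvd_triv_left)
  then obtain i where i: "order K = p ^ i" using divides_primepow_nat[OF p] by blast
  have "i > 0"
  proof (rule ccontr)
    assume "\<not> i > 0"
    hence "order K = 1" using i by simp
    hence "card N = card P" using lag oK by simp
    hence "N = P" using card_subset_eq[OF finP NP] by simp
    thus False using ne by simp
  qed
  obtain z where z: "z \<in> carrier K" "z \<noteq> \<one>\<^bsub>K\<^esub>" "\<forall>y\<in>carrier K. z \<otimes>\<^bsub>K\<^esub> y = y \<otimes>\<^bsub>K\<^esub> z"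
    using pgroup_center[OF gK finK i \<open>i > 0\<close> p] by blast
  obtain x where x: "x \<in> P" "z = N #>\<^bsub>G\<^esub> x" using z(1) carK by auto
  have xc: "x \<in> carrier G" using x Ps by auto
  have oneK: "\<one>\<^bsub>K\<^esub> = N" unfolding K_def by simp
  have multK: "\<And>U W. U \<otimes>\<^bsub>K\<^esub> W = U <#>\<^bsub>G\<^esub> W" unfolding K_def GP_def by simp
  have rsum: "(N #>\<^bsub>G\<^esub> m1) <#>\<^bsub>G\<^esub> (N #>\<^bsub>G\<^esub> m2) = N #>\<^bsub>G\<^esub> (m1 \<otimes>\<^bsub>G\<^esub> m2)"
    if "m1 \<in> P" "m2 \<in> P" for m1 m2
    using nN.rcos_sum[of m1 m2] that unfolding GP_def by simp
  have xN: "x \<notin> N"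
  proof
    assume "x \<in> N"
    hence "N #>\<^bsub>G\<^esub> x = N" using subgroup.rcos_const[OF N G] by blast
    thus False using z(2) x(2) oneK by simp
  qed
  have "\<forall>y\<in>P. x \<otimes>\<^bsub>G\<^esub> y \<otimes>\<^bsub>G\<^esub> inv\<^bsub>G\<^esub> x \<otimes>\<^bsub>G\<^esub> inv\<^bsub>G\<^esub> y \<in> N"
  proof
    fix y assume yP: "y \<in> P"
    have yc: "y \<in> carrier G" using yP Ps by auto
    have "N #>\<^bsub>G\<^esub> y \<in> carrier K" using carK yP by blast
    hence "z \<otimes>\<^bsub>K\<^esub> (N #>\<^bsub>G\<^esub> y) = (N #>\<^bsub>G\<^esub> y) \<otimes>\<^bsub>K\<^esub> z" using z(3) by blast
    hence eq: "N #>\<^bsub>G\<^esub> (x \<otimes>\<^bsub>G\<^esub> y) = N #>\<^bsub>G\<^esub> (y \<otimes>\<^bsub>G\<^esub> x)"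
      unfolding multK x(2) using rsum[OF x(1) yP] rsum[OF yP x(1)] by simp
    have "x \<otimes>\<^bsub>G\<^esub> y \<in> N #>\<^bsub>G\<^esub> (x \<otimes>\<^bsub>G\<^esub> y)" using Gg.rcos_self[OF _ N] xc yc by simp
    hence "x \<otimes>\<^bsub>G\<^esub> y \<in> N #>\<^bsub>G\<^esub> (y \<otimes>\<^bsub>G\<^esub> x)" using eq by simp
    hence "(x \<otimes>\<^bsub>G\<^esub> y) \<otimes>\<^bsub>G\<^esub> inv\<^bsub>G\<^esub> (y \<otimes>\<^bsub>G\<^esub> x) \<in> N"
      using subgroup.rcos_module_imp[OF N G] xc yc by simp
    thus "x \<otimes>\<^bsub>G\<^esub> y \<otimes>\<^bsub>G\<^esub> inv\<^bsub>G\<^esub> x \<otimes>\<^bsub>G\<^esub> inv\<^bsub>G\<^esub> y \<in> N"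
      using xc yc by (simp add: Gg.m_assoc Gg.inv_mult_group)
  qed
  thus ?thesis using x(1) xN by blast
qed

end


context cs begin

lemma P_case:
  assumes P: "subgroup P G" and Pi: "\<forall>a\<in>carrier A. \<alpha> a ` P \<subseteq> P"
    and cP: "card P = p ^ k" and p: "Factorial_Ring.prime p"
  shows "fixed_points \<alpha> B P = set_prod_list G (map (\<lambda>i. fixed_points \<alpha> (As i) P) [1..<q+2])"
proof -
  have Ps: "P \<subseteq> carrier G" using P subgroup.subset by blast
  have finP: "finite P" using Ps finG finite_subset by blast
  have main: "\<And>N. subgroup N G \<Longrightarrow> N \<subseteq> P \<Longrightarrow> (\<forall>h\<in>P. \<forall>k\<in>N. h \<otimes>\<^bsub>G\<^esub> k \<otimes>\<^bsub>G\<^esub> inv\<^bsub>G\<^esub> h \<in> N) \<Longrightarrow>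
     (\<forall>a\<in>carrier A. \<alpha> a ` N \<subseteq> N) \<Longrightarrow>
     \<forall>y\<in>fixed_points \<alpha> B P. \<exists>cl. list_all2 (\<lambda>y S. y \<in> S) cl (map (\<lambda>i. fixed_points \<alpha> (As i) P) [1..<q+2])
                 \<and> (\<exists>m\<in>fixed_points \<alpha> B P \<inter> N. y = lprod G cl \<otimes>\<^bsub>G\<^esub> m)"
  proof -
    fix N0 :: "'a set"
    show "subgroup N0 G \<Longrightarrow> N0 \<subseteq> P \<Longrightarrow> (\<forall>h\<in>P. \<forall>k\<in>N0. h \<otimes>\<^bsub>G\<^esub> k \<otimes>\<^bsub>G\<^esub> inv\<^bsub>G\<^esub> h \<in> N0) \<Longrightarrow>
     (\<forall>a\<in>carrier A. \<alpha> a ` N0 \<subseteq> N0) \<Longrightarrow>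
     \<forall>y\<in>fixed_points \<alpha> B P. \<exists>cl. list_all2 (\<lambda>y S. y \<in> S) cl (map (\<lambda>i. fixed_points \<alpha> (As i) P) [1..<q+2])
                 \<and> (\<exists>m\<in>fixed_points \<alpha> B P \<inter> N0. y = lprod G cl \<otimes>\<^bsub>G\<^esub> m)"
    proof (induction "card P - card N0" arbitrary: N0 rule: less_induct)
      case (less N)
      show ?case
      proof (cases "N = P")
        case True
        then show ?thesis using start[OF P] by simp
      next
        case False
        define Np where "Np = {x\<in>P. \<forall>y\<in>P. x \<otimes>\<^bsub>G\<^esub> y \<otimes>\<^bsub>G\<^esub> inv\<^bsub>G\<^esub> x \<otimes>\<^bsub>G\<^esub> inv\<^bsub>G\<^esub> y \<in> N}"
        have Nps: "subgroup Np G" unfolding Np_def using np_sub[OF P less.prems(1,2,3)] .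
        have fa: "N \<subseteq> Np" "Np \<subseteq> P" "\<forall>h\<in>P. \<forall>k\<in>Np. h \<otimes>\<^bsub>G\<^esub> k \<otimes>\<^bsub>G\<^esub> inv\<^bsub>G\<^esub> h \<in> Np"
          "\<forall>a\<in>carrier A. \<alpha> a ` Np \<subseteq> Np"
          using np_facts[OF P Pi less.prems] unfolding Np_def by blast+
        obtain x where x: "x \<in> P" "x \<notin> N" "\<forall>y\<in>P. x \<otimes>\<^bsub>G\<^esub> y \<otimes>\<^bsub>G\<^esub> inv\<^bsub>G\<^esub> x \<otimes>\<^bsub>G\<^esub> inv\<^bsub>G\<^esub> y \<in> N"
          using np_grow[OF P cP p less.prems(1,2,3) False] by blast
        have "x \<in> Np" unfolding Np_def using x by blast
        hence "N \<subset> Np" using fa(1) x(2) by blast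
        hence "card N < card Np" using psubset_card_mono finite_subset[OF fa(2) finP] by blast
        moreover have "card Np \<le> card P" using card_mono[OF finP fa(2)] .
        ultimately have lt: "card P - card Np < card P - card N" by simp
        have IH: "\<forall>y\<in>fixed_points \<alpha> B P. \<exists>cl. list_all2 (\<lambda>y S. y \<in> S) cl (map (\<lambda>i. fixed_points \<alpha> (As i) P) [1..<q+2])
                 \<and> (\<exists>m\<in>fixed_points \<alpha> B P \<inter> Np. y = lprod G cl \<otimes>\<^bsub>G\<^esub> m)"
          using less.hyps[OF lt Nps fa(2) fa(3) fa(4)] .
        have LXc: "\<forall>l\<in>Np. \<forall>x\<in>P. l \<otimes>\<^bsub>G\<^esub> x \<otimes>\<^bsub>G\<^esub> inv\<^bsub>G\<^esub> l \<otimes>\<^bsub>G\<^esub> inv\<^bsub>G\<^esub> x \<in> N"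
          unfolding Np_def by blast
        show ?thesis
          by (rule step[OF P Pi less.prems(1) Nps fa(1) fa(2) less.prems(3) LXc less.prems(4) fa(4) IH])
      qed
    qed
  qed
  have one: "subgroup {\<one>\<^bsub>G\<^esub>} G" using Gg.triv_subgroup .
  have "\<forall>y\<in>fixed_points \<alpha> B P. \<exists>cl. list_all2 (\<lambda>y S. y \<in> S) cl (map (\<lambda>i. fixed_points \<alpha> (As i) P) [1..<q+2])
                 \<and> (\<exists>m\<in>fixed_points \<alpha> B P \<inter> {\<one>\<^bsub>G\<^esub>}. y = lprod G cl \<otimes>\<^bsub>G\<^esub> m)"
  proof (rule main[OF one])
    show "{\<one>\<^bsub>G\<^esub>} \<subseteq> P" using subgroup.one_closed[OF P] by simp
    show "\<forall>h\<in>P. \<forall>k\<in>{\<one>\<^bsub>G\<^esub>}. h \<otimes>\<^bsub>G\<^esub> k \<otimes>\<^bsub>G\<^esub> inv\<^bsub>G\<^esub> h \<in> {\<one>\<^bsub>G\<^esub>}" using Ps by auto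
    show "\<forall>a\<in>carrier A. \<alpha> a ` {\<one>\<^bsub>G\<^esub>} \<subseteq> {\<one>\<^bsub>G\<^esub>}" using \<alpha>one by auto
  qed
  thus ?thesis using finish[OF P] by simp
qed

end


theorem lemma2p3:
  fixes A :: "('c, 'd) monoid_scheme" and G :: "('a, 'b) monoid_scheme"
    and \<alpha> :: "'c \<Rightarrow> 'a \<Rightarrow> 'a"
    and q p :: nat and B :: "'c set" and P H :: "'a set"
    and As :: "nat \<Rightarrow> 'c set"
  assumes "Factorial_Ring.prime q"
    and "group A" and "finite (carrier A)" and "order A = q ^ 3"
    and "\<forall>a \<in> carrier A. a [^]\<^bsub>A\<^esub> q = \<one>\<^bsub>A\<^esub>"
    and "subgroup B A" and "card B = q" and "B \<subseteq> group_center A"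
    and "group G" and "finite (carrier G)" and "coprime (order G) q"
    and "acts_by_automorphisms A G \<alpha>"
    and "carrier G = P <#>\<^bsub>G\<^esub> H"
    and "subgroup P G" and "subgroup H G"
    and "\<forall>a \<in> carrier A. \<alpha> a ` P \<subseteq> P" and "\<forall>a \<in> carrier A. \<alpha> a ` H \<subseteq> H"
    and "Factorial_Ring.prime p" and "P \<lhd> G" and "\<exists>k. card P = p ^ k"
    and "nilpotent_subgroup G H" and "\<not> p dvd card H"
    and "bij_betw As {1..q+1} {S. subgroup S A \<and> card S = q ^ 2 \<and> B \<subseteq> S}"
  shows "fixed_points \<alpha> B P = set_prod_list G (map (\<lambda>i. fixed_points \<alpha> (As i) P) [1..<q+2])
       \<and> fixed_points \<alpha> B H = set_prod_list G (map (\<lambda>i. fixed_points \<alpha> (As i) H) [1..<q+2])"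
proof -
  interpret cs A G \<alpha> q B As
    by (rule cs.intro[OF assms(1-12) assms(23)])
  obtain k where k: "card P = p ^ k" using assms(20) by blast
  show ?thesis
  proof
    show "fixed_points \<alpha> B P = set_prod_list G (map (\<lambda>i. fixed_points \<alpha> (As i) P) [1..<q+2])"
      using P_case[OF assms(14) assms(16) k assms(18)] .
    show "fixed_points \<alpha> B H = set_prod_list G (map (\<lambda>i. fixed_points \<alpha> (As i) H) [1..<q+2])"
      using H_case[OF assms(15) assms(17) assms(21)] .
  qed
qed

end
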